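(* Let $H=(v_1,\dots,v_6)$ be an embedded equilateral hexagon, considered up to translations and rotations, whose action-angle coordinates $(d_1,d_2,d_3,\theta_1,\theta_2,\theta_3)$ for the $T_{135}$ triangulation are defined. If $J(H)=(-1,1)$, then $\theta_i\in(0,\pi)$ for all $i\in\{1,2,3\}$, and $\theta_1+\theta_2<\pi$, $\theta_1+\theta_3<\pi$, $\theta_2+\theta_3<\pi$.
   Context: An equilateral hexagon is an ordered 6-tuple $H=(v_1,\dots,v_6)$ in $\mathbb{R}^3$ with $\|v_i-v_{i+1}\|=1$ (indices mod 6), edges $e_i=[v_i,v_{i+1}]$, oriented $v_1\to v_2\to\cdots\to v_6\to v_1$; embedded means non-adjacent edges are disjoint and adjacent ones meet only at their common endpoint. Standard position: $v_1=0$, $v_3$ on the positive $x$-axis, $v_5$ in the $xy$-plane with positive $y$-coordinate. Action-angle coordinates ($T_{135}$ triangulation), defined when $v_1,v_3,v_5$ are not collinear and $0<d_i<2$: $d_1=\|v_3-v_1\|$, $d_2=\|v_5-v_3\|$, $d_3=\|v_1-v_5\|$; with $m_1,m_2,m_3$ the midpoints of $[v_1,v_3],[v_3,v_5],[v_5,v_1]$, $u_1,u_2,u_3$ the unit vectors in the $xy$-plane perpendicular to these segments pointing toward the opposite vertex of triangle $v_1v_3v_5$ (toward $v_5,v_1,v_3$ respectively), and $e_z=(0,0,1)$, the angles $\theta_i\in[0,2\pi)$ are determined by $v_{2i}=m_i+\tfrac12\sqrt{4-d_i^2}(\cos\theta_i\,u_i+\sin\theta_i\,e_z)$ (regular planar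 hexagon: all $\theta_i=\pi$). Joint Chirality-Curl: $curl(H)=\operatorname{sign}\big((v_3-v_1)\times(v_5-v_1)\cdot(v_2-v_1)\big)$. For $i=2,4,6$, $T_i$ is the open triangular disk with vertices $v_{i-1},v_i,v_{i+1}$, oriented by the right-hand rule (normal $(v_i-v_{i-1})\times(v_{i+1}-v_i)$), and $\Delta_i$ is the algebraic intersection number of $T_i$ with the oriented polygon $H$. Then $J(H)=(\Delta_2\Delta_4\Delta_6,\ \Delta_2^2\Delta_4^2\Delta_6^2\,curl(H))$. *)

theory Defs
  imports "HOL-Analysis.Analysis"
begin

text \<open>A hexagon is given by a function v with vertices v 1, ..., v 6;
  hv v i is vertex v_i with the index read cyclically mod 6 (so hv v 0 = v 6, hv v 7 = v 1).\<close>

definition hv :: "(nat \<Rightarrow> real^3) \<Rightarrow> nat \<Rightarrow> real^3" where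
  "hv v i = v ((i + 5) mod 6 + 1)"

definition hedge :: "(nat \<Rightarrow> real^3) \<Rightarrow> nat \<Rightarrow> (real^3) set" where
  "hedge v i = closed_segment (hv v i) (hv v (i + 1))"

definition equilateral_hexagon :: "(nat \<Rightarrow> real^3) \<Rightarrow> bool" where
  "equilateral_hexagon v \<longleftrightarrow> (\<forall>i\<in>{1..6}. dist (hv v i) (hv v (i + 1)) = 1)"

definition embedded_hexagon :: "(nat \<Rightarrow> real^3) \<Rightarrow> bool" where
  "embedded_hexagon v \<longleftrightarrow>
     (\<forall>i\<in>{1..6}. hedge v i \<inter> hedge v (i mod 6 + 1) = {hv v (i + 1)}) \<and>
     (\<forall>i\<in>{1..6}. \<forall>j\<in>{1..6}. i \<noteq> j \<and> j \<noteq> i mod 6 + 1 \<and> i \<noteq> j mod 6 + 1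
        \<longrightarrow> hedge v i \<inter> hedge v j = {})"

definition curl :: "(nat \<Rightarrow> real^3) \<Rightarrow> real" where
  "curl v = sgn ((cross3 (hv v 3 - hv v 1) (hv v 5 - hv v 1)) \<bullet> (hv v 2 - hv v 1))"

definition open_triangle :: "real^3 \<Rightarrow> real^3 \<Rightarrow> real^3 \<Rightarrow> (real^3) set" where
  "open_triangle a b c =
     {x. \<exists>\<alpha> \<beta> \<gamma>. \<alpha> > 0 \<and> \<beta> > 0 \<and> \<gamma> > 0 \<and> \<alpha> + \<beta> + \<gamma> = 1 \<and>
          x = \<alpha> *\<^sub>R a + \<beta> *\<^sub>R b + \<gamma> *\<^sub>R c}"

definition tri_normal :: "(nat \<Rightarrow> real^3) \<Rightarrow> nat \<Rightarrow> real^3" where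
  "tri_normal v i = cross3 (hv v i - hv v (i - 1)) (hv v (i + 1) - hv v i)"

text \<open>Algebraic intersection number of the oriented open triangle T_i (i = 2,4,6) with
  the oriented polygon. Each edge e_j = [p,q] meeting the plane of T_i in a single point
  lying in the open disk contributes (sgn s(q) - sgn s(p))/2, where s is the signed
  height over the plane: a transverse crossing contributes +1 or -1 according to whether
  the edge direction agrees with the normal; the half-weights make the count correct
  (and well defined) when the polygon passes through the disk at a vertex.\<close>
definition Delta :: "(nat \<Rightarrow> real^3) \<Rightarrow> nat \<Rightarrow> real" where
  "Delta v i =
     (\<Sum>j=1..6.
        let n = tri_normal v i; a = hv v (i - 1);
            p = hv v j; q = hv v (j + 1);
            sp = n \<bullet> (p - a); sq = n \<bullet> (q - a);
            x = p + (sp / (sp - sq)) *\<^sub>R (q - p)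
        in if sp \<noteq> sq \<and> x \<in> open_triangle (hv v (i - 1)) (hv v i) (hv v (i + 1))
           then (sgn sq - sgn sp) / 2 else 0)"

definition J :: "(nat \<Rightarrow> real^3) \<Rightarrow> real \<times> real" where
  "J v = (Delta v 2 * Delta v 4 * Delta v 6,
          (Delta v 2)\<^sup>2 * (Delta v 4)\<^sup>2 * (Delta v 6)\<^sup>2 * curl v)"

text \<open>Action-angle coordinates for the T_135 triangulation, stated invariantly
  (they agree with the standard-position definition; e_z is the unit normal of the
  triangle v1 v3 v5 oriented by (v3-v1) x (v5-v1), which is (0,0,1) in standard position).\<close>
definition aa_d :: "(nat \<Rightarrow> real^3) \<Rightarrow> nat \<Rightarrow> real" where
  "aa_d v i = dist (hv v (2*i + 1)) (hv v (2*i - 1))"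

definition aa_mid :: "(nat \<Rightarrow> real^3) \<Rightarrow> nat \<Rightarrow> real^3" where
  "aa_mid v i = midpoint (hv v (2*i - 1)) (hv v (2*i + 1))"

definition aa_ez :: "(nat \<Rightarrow> real^3) \<Rightarrow> real^3" where
  "aa_ez v = sgn (cross3 (hv v 3 - hv v 1) (hv v 5 - hv v 1))"

text \<open>u_i: unit vector in the plane of v1 v3 v5, perpendicular to the segment, pointing
  toward the opposite vertex (normalized component of (opposite vertex - midpoint)
  orthogonal to the segment).\<close>
definition aa_u :: "(nat \<Rightarrow> real^3) \<Rightarrow> nat \<Rightarrow> real^3" where
  "aa_u v i =
     (let a = hv v (2*i - 1); b = hv v (2*i + 1); c = hv v (2*i + 3);
          w = (c - midpoint a b) - (((c - midpoint a b) \<bullet> (b - a)) / ((b - a) \<bullet> (b - a))) *\<^sub>R (b - a)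
      in sgn w)"

definition aa_defined :: "(nat \<Rightarrow> real^3) \<Rightarrow> bool" where
  "aa_defined v \<longleftrightarrow> \<not> collinear {hv v 1, hv v 3, hv v 5} \<and>
     (\<forall>i\<in>{1,2,3}. 0 < aa_d v i \<and> aa_d v i < 2)"

definition aa_theta :: "(nat \<Rightarrow> real^3) \<Rightarrow> nat \<Rightarrow> real" where
  "aa_theta v i = (THE \<theta>. 0 \<le> \<theta> \<and> \<theta> < 2 * pi \<and>
      hv v (2*i) = aa_mid v i + (sqrt (4 - (aa_d v i)\<^sup>2) / 2) *\<^sub>R
                     (cos \<theta> *\<^sub>R aa_u v i + sin \<theta> *\<^sub>R aa_ez v))"

end

theory Submission
  imports Defs
begin

definition ct :: "real^3 \<Rightarrow> real^3 \<Rightarrow> real^3 \<Rightarrow> real^3 \<Rightarrow> real^3 \<Rightarrow> real^3 \<Rightarrow> real^3 \<Rightarrow> real" where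
 "ct n a A B C p q = (let sp = n \<bullet> (p - a); sq = n \<bullet> (q - a); x = p + (sp / (sp - sq)) *\<^sub>R (q - p)
     in if sp \<noteq> sq \<and> x \<in> open_triangle A B C then (sgn sq - sgn sp)/2 else 0)"

lemma sum16: "(\<Sum>j=1..6. f j) = f 1 + f 2 + f 3 + f 4 + f (5::nat) + (f 6 :: real)"
  by (simp add: numeral_eq_Suc)

lemma Delta_expand:
 "Delta v i = (let n = tri_normal v i; a = hv v (i-1); A = hv v (i-1); B = hv v i; C = hv v (i+1) in
   ct n a A B C (hv v 1) (hv v 2) + ct n a A B C (hv v 2) (hv v 3) + ct n a A B C (hv v 3) (hv v 4)
 + ct n a A B C (hv v 4) (hv v 5) + ct n a A B C (hv v 5) (hv v 6) + ct n a A B C (hv v 6) (hv v 7))"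
  unfolding Delta_def sum16 ct_def Let_def by (simp only: one_add_one numeral_plus_one semiring_norm)

lemma hv7: "hv v 7 = hv v 1" and hv0: "hv v 0 = hv v 6" and hv8: "hv v 8 = hv v 2" and hv9: "hv v 9 = hv v 3"
  by (simp_all add: hv_def)


lemma triple_cyc: "(cross3 x y) \<bullet> z = (cross3 y z) \<bullet> x"
  by (simp add: cross3_simps)

lemma tri_id: "(cross3 (b - a) (c - b)) \<bullet> (d - a) = (cross3 (c - a) (d - a)) \<bullet> (b - a)"
  by (simp add: cross3_simps)

lemma N_cyc: "cross3 (c - b) (a - b) = cross3 (b - a) (c - a)"
  by (simp add: cross3_simps)

lemma vtriple: "cross3 x (cross3 y z) = (x \<bullet> z) *\<^sub>R y - (x \<bullet> y) *\<^sub>R z"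
  by (simp add: cross3_simps forall_3)

lemma vtriple2: "cross3 (cross3 x y) z = (x \<bullet> z) *\<^sub>R y - (y \<bullet> z) *\<^sub>R x"
  by (simp add: cross3_simps forall_3)

lemma cross_par:
  assumes "x \<bullet> N = 0" "y \<bullet> N = 0"
  shows "(N \<bullet> N) *\<^sub>R cross3 x y = ((cross3 x y) \<bullet> N) *\<^sub>R N"
proof -
  have "cross3 (cross3 x y) N = 0" using assms by (simp add: vtriple2)
  hence "cross3 N (cross3 (cross3 x y) N) = 0" by simp
  thus ?thesis by (simp add: vtriple inner_commute)
qed

lemma perp_zero:
  assumes "Y \<bullet> E = 0" "Y \<bullet> F = 0" "Y \<bullet> cross3 E F = 0" "cross3 E F \<noteq> 0"
  shows "Y = 0"
proof -
  have "cross3 Y (cross3 E F) = 0" using assms by (simp add: vtriple)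
  hence "(norm Y * norm (cross3 E F))^2 = 0" using norm_cross_dot[of Y "cross3 E F"] assms(3) by simp
  thus ?thesis using assms(4) by simp
qed

lemma det_comb:
  assumes "N = cross3 E F"
  shows "(cross3 (a *\<^sub>R E + b *\<^sub>R F + c *\<^sub>R N) E) \<bullet> (a' *\<^sub>R E + b' *\<^sub>R F + c' *\<^sub>R N)
          = (N \<bullet> N) * (c * b' - b * c')"
    and "(cross3 F (a' *\<^sub>R E + b' *\<^sub>R F + c' *\<^sub>R N)) \<bullet> (a *\<^sub>R E + b *\<^sub>R F + c *\<^sub>R N)
          = (N \<bullet> N) * (a * c' - a' * c)"
proof -
  have e1: "(cross3 E F) \<bullet> E = 0" "(cross3 E F) \<bullet> F = 0" by (simp_all add: dot_cross_self)
  have e2: "(cross3 F E) \<bullet> N = - (N \<bullet> N)" "(cross3 N E) \<bullet> F = N \<bullet> N" "(cross3 F N) \<bullet> E = N \<bullet> N"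
    using assms by (simp_all add: cross3_simps)
  show "(cross3 (a *\<^sub>R E + b *\<^sub>R F + c *\<^sub>R N) E) \<bullet> (a' *\<^sub>R E + b' *\<^sub>R F + c' *\<^sub>R N)
          = (N \<bullet> N) * (c * b' - b * c')"
    using e2 by (simp add: cross_add_left cross_mult_left inner_add_left inner_add_right dot_cross_self algebra_simps)
  show "(cross3 F (a' *\<^sub>R E + b' *\<^sub>R F + c' *\<^sub>R N)) \<bullet> (a *\<^sub>R E + b *\<^sub>R F + c *\<^sub>R N)
          = (N \<bullet> N) * (a * c' - a' * c)"
    using e2 by (simp add: cross_add_right cross_mult_right inner_add_left inner_add_right dot_cross_self algebra_simps)
qed


lemma open_triangle_iff:
  "x \<in> open_triangle A B C \<longleftrightarrow>
   (\<exists>\<beta> \<gamma>. \<beta> > 0 \<and> \<gamma> > 0 \<and> \<beta> + \<gamma> < 1 \<and> x = A + \<beta> *\<^sub>R (B - A) + \<gamma> *\<^sub>R (C - A))"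
proof
  assume "x \<in> open_triangle A B C"
  then obtain \<alpha> \<beta> \<gamma> where h: "\<alpha> > 0" "\<beta> > 0" "\<gamma> > 0" "\<alpha> + \<beta> + \<gamma> = 1"
     "x = \<alpha> *\<^sub>R A + \<beta> *\<^sub>R B + \<gamma> *\<^sub>R C" unfolding open_triangle_def by blast
  have "x = A + \<beta> *\<^sub>R (B - A) + \<gamma> *\<^sub>R (C - A)"
  proof -
    have "\<alpha> = 1 - \<beta> - \<gamma>" using h by simp
    hence "x = (1 - \<beta> - \<gamma>) *\<^sub>R A + \<beta> *\<^sub>R B + \<gamma> *\<^sub>R C" using h(5) by simp
    thus ?thesis by (simp add: algebra_simps)
  qed
  thus "\<exists>\<beta> \<gamma>. \<beta> > 0 \<and> \<gamma> > 0 \<and> \<beta> + \<gamma> < 1 \<and> x = A + \<beta> *\<^sub>R (B - A) + \<gamma> *\<^sub>R (C - A)"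
    using h by (intro exI[of _ \<beta>] exI[of _ \<gamma>]) auto
next
  assume "\<exists>\<beta> \<gamma>. \<beta> > 0 \<and> \<gamma> > 0 \<and> \<beta> + \<gamma> < 1 \<and> x = A + \<beta> *\<^sub>R (B - A) + \<gamma> *\<^sub>R (C - A)"
  then obtain \<beta> \<gamma> where h: "\<beta> > 0" "\<gamma> > 0" "\<beta> + \<gamma> < 1" "x = A + \<beta> *\<^sub>R (B - A) + \<gamma> *\<^sub>R (C - A)"
    by blast
  have "x = (1 - \<beta> - \<gamma>) *\<^sub>R A + \<beta> *\<^sub>R B + \<gamma> *\<^sub>R C" using h(4) by (simp add: algebra_simps)
  thus "x \<in> open_triangle A B C" unfolding open_triangle_def using h
    by (intro CollectI exI[of _ "1 - \<beta> - \<gamma>"] exI[of _ \<beta>] exI[of _ \<gamma>]) auto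
qed

lemma open_triangle_rot: "open_triangle A B C = open_triangle B C A"
proof -
  have "\<And>A B C x. x \<in> open_triangle A B C \<Longrightarrow> x \<in> open_triangle B C A"
  proof -
    fix A B C x assume "x \<in> open_triangle A B C"
    then obtain \<alpha> \<beta> \<gamma> where h: "\<alpha> > 0" "\<beta> > 0" "\<gamma> > 0" "\<alpha> + \<beta> + \<gamma> = 1"
     "x = \<alpha> *\<^sub>R A + \<beta> *\<^sub>R B + \<gamma> *\<^sub>R C" unfolding open_triangle_def by blast
    show "x \<in> open_triangle B C A" unfolding open_triangle_def using h
      by (intro CollectI exI[of _ \<beta>] exI[of _ \<gamma>] exI[of _ \<alpha>]) (auto simp: algebra_simps)
  qed
  thus ?thesis by blast
qed

definition indep2 :: "real^3 \<Rightarrow> real^3 \<Rightarrow> bool" where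
  "indep2 x y \<longleftrightarrow> (\<forall>s t. s *\<^sub>R x + t *\<^sub>R y = 0 \<longrightarrow> s = 0 \<and> t = 0)"

lemma indep_len:
  assumes "norm (B - A) = 1" "norm (C - B) = 1" "0 < norm (C - A)" "norm (C - A) < 2"
  shows "indep2 (B - A) (C - A)"
  unfolding indep2_def
proof (intro allI impI)
  fix s t assume st: "s *\<^sub>R (B - A) + t *\<^sub>R (C - A) = 0"
  show "s = 0 \<and> t = 0"
  proof (cases "s = 0")
    case True
    then show ?thesis using st assms(3) by auto
  next
    case False
    define k where "k = - t / s"
    have bk: "B - A = k *\<^sub>R (C - A)"
    proof -
      have "s *\<^sub>R (B - A) = - t *\<^sub>R (C - A)" using st by (simp add: eq_neg_iff_add_eq_0)
      hence "(1/s) *\<^sub>R (s *\<^sub>R (B - A)) = (1/s) *\<^sub>R (- t *\<^sub>R (C - A))" by simp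
      thus ?thesis using False by (simp add: k_def)
    qed
    have cb: "C - B = (1 - k) *\<^sub>R (C - A)"
    proof -
      have "C - B = (C - A) - (B - A)" by simp
      also have "\<dots> = (1 - k) *\<^sub>R (C - A)" using bk by (simp add: algebra_simps)
      finally show ?thesis .
    qed
    have n1: "\<bar>k\<bar> * norm (C - A) = 1" using assms(1) bk by simp
    have n2: "\<bar>1 - k\<bar> * norm (C - A) = 1" using assms(2) cb by simp
    have "\<bar>k\<bar> = \<bar>1 - k\<bar>" using n1 n2 assms(3) by (metis mult_right_cancel less_irrefl)
    hence "k = 1/2" by (auto simp: abs_if split: if_splits)
    hence "norm (C - A) = 2" using n1 by (simp only:)
    thus ?thesis using assms(4) by simp
  qed
qed

lemma indep_not_vertex:
  assumes "indep2 (B - A) (C - A)"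
  shows "A \<notin> open_triangle A B C" "B \<notin> open_triangle A B C" "C \<notin> open_triangle A B C"
proof -
  have key: "\<And>x b g. x \<in> open_triangle A B C \<Longrightarrow> x = A + b *\<^sub>R (B - A) + g *\<^sub>R (C - A) \<Longrightarrow> b \<le> 0 \<or> g \<le> 0 \<Longrightarrow> False"
  proof -
    fix x b g assume x1: "x \<in> open_triangle A B C" and x2: "x = A + b *\<^sub>R (B - A) + g *\<^sub>R (C - A)"
      and that: "b \<le> 0 \<or> g \<le> 0"
    obtain \<beta> \<gamma> where h: "\<beta> > 0" "\<gamma> > 0" "x = A + \<beta> *\<^sub>R (B - A) + \<gamma> *\<^sub>R (C - A)"
      using x1 unfolding open_triangle_iff by blast
    have "(\<beta> - b) *\<^sub>R (B - A) + (\<gamma> - g) *\<^sub>R (C - A) = 0"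
      using h(3) x2 by (simp add: algebra_simps)
    hence "\<beta> - b = 0 \<and> \<gamma> - g = 0" using assms unfolding indep2_def by blast
    thus False using that h by auto
  qed
  show "A \<notin> open_triangle A B C" by (rule notI, rule key[of A 0 0]) auto
  show "B \<notin> open_triangle A B C" by (rule notI, rule key[of B 1 0]) auto
  show "C \<notin> open_triangle A B C" by (rule notI, rule key[of C 0 1]) auto
qed


lemma ct_plane: "n \<bullet> (p - a) = n \<bullet> (q - a) \<Longrightarrow> ct n a A B C p q = 0"
  unfolding ct_def Let_def by simp

lemma ct_start: "n \<bullet> (p - a) = 0 \<Longrightarrow> p \<notin> open_triangle A B C \<Longrightarrow> ct n a A B C p q = 0"
  unfolding ct_def Let_def by simp

lemma ct_end: "n \<bullet> (q - a) = 0 \<Longrightarrow> q \<notin> open_triangle A B C \<Longrightarrow> ct n a A B C p q = 0"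
  unfolding ct_def Let_def by auto

lemma ct_nz:
  assumes "ct n a A B C p q \<noteq> 0"
  shows "\<exists>x t. x \<in> open_triangle A B C \<and> 0 \<le> t \<and> t \<le> 1 \<and> x = (1 - t) *\<^sub>R p + t *\<^sub>R q \<and>
     sgn (n \<bullet> (q - a)) \<noteq> sgn (n \<bullet> (p - a)) \<and>
     ct n a A B C p q = (sgn (n \<bullet> (q - a)) - sgn (n \<bullet> (p - a))) / 2"
proof -
  define sp where "sp = n \<bullet> (p - a)"
  define sq where "sq = n \<bullet> (q - a)"
  define t where "t = sp / (sp - sq)"
  have c: "sp \<noteq> sq \<and> p + t *\<^sub>R (q - p) \<in> open_triangle A B C" and
    v: "ct n a A B C p q = (sgn sq - sgn sp)/2"
    using assms unfolding ct_def Let_def sp_def[symmetric] sq_def[symmetric] t_def[symmetric]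
    by (auto split: if_splits)
  have d: "sgn sq \<noteq> sgn sp" using v assms by auto
  have t01: "0 \<le> t \<and> t \<le> 1"
  proof (cases "sp > sq")
    case True
    have "sp \<ge> 0" "sq \<le> 0" using d True by (auto simp: sgn_if split: if_splits)
    then show ?thesis using True unfolding t_def by (auto simp: divide_simps)
  next
    case False
    hence lt: "sp < sq" using c by auto
    have "sp \<le> 0" "sq \<ge> 0" using d lt by (auto simp: sgn_if split: if_splits)
    then show ?thesis using lt unfolding t_def by (auto simp: divide_simps)
  qed
  have "p + t *\<^sub>R (q - p) = (1 - t) *\<^sub>R p + t *\<^sub>R q" by (simp add: algebra_simps)
  thus ?thesis using c v d t01 unfolding sp_def sq_def by (intro exI[of _ "p + t *\<^sub>R (q - p)"] exI[of _ t]) auto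
qed

lemma ct_flat:
  assumes "n \<bullet> (q - a) = 0" "n \<bullet> (p - a) = k * zp" "n \<bullet> (r - a) = k * zr" "zp > 0" "zr > 0"
  shows "ct n a A B C p q + ct n a A B C q r = 0"
proof (cases "k = 0")
  case True
  then show ?thesis using assms by (simp add: ct_plane)
next
  case False
  have x1: "p + ((k * zp) / (k * zp - 0)) *\<^sub>R (q - p) = q" using False assms by simp
  have s1: "sgn (k * zp) = sgn k" "sgn (k * zr) = sgn k" using assms by (simp_all add: sgn_mult)
  show ?thesis using assms False x1 s1 unfolding ct_def Let_def by auto
qed

lemma ct_range_out:
  assumes "n \<bullet> (p - a) > 0"
  shows "ct n a A B C p q \<le> 0" "ct n a A B C p q \<ge> -1"
    "ct n a A B C p q = -1 \<Longrightarrow> n \<bullet> (q - a) < 0 \<and>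
        (\<exists>x t. x \<in> open_triangle A B C \<and> 0 \<le> t \<and> t \<le> 1 \<and> x = (1 - t) *\<^sub>R p + t *\<^sub>R q)"
proof -
  have "ct n a A B C p q = 0 \<or> (ct n a A B C p q = (sgn (n \<bullet> (q - a)) - 1) / 2 \<and>
      (\<exists>x t. x \<in> open_triangle A B C \<and> 0 \<le> t \<and> t \<le> 1 \<and> x = (1 - t) *\<^sub>R p + t *\<^sub>R q))"
    using ct_nz[of n a A B C p q] assms by auto
  thus "ct n a A B C p q \<le> 0" "ct n a A B C p q \<ge> -1"
    "ct n a A B C p q = -1 \<Longrightarrow> n \<bullet> (q - a) < 0 \<and>
        (\<exists>x t. x \<in> open_triangle A B C \<and> 0 \<le> t \<and> t \<le> 1 \<and> x = (1 - t) *\<^sub>R p + t *\<^sub>R q)"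
    by (auto simp: sgn_if split: if_splits)
qed

lemma ct_range_in:
  assumes "n \<bullet> (q - a) > 0"
  shows "ct n a A B C p q \<ge> 0" "ct n a A B C p q \<le> 1"
    "ct n a A B C p q = 1 \<Longrightarrow> n \<bullet> (p - a) < 0 \<and>
        (\<exists>x t. x \<in> open_triangle A B C \<and> 0 \<le> t \<and> t \<le> 1 \<and> x = (1 - t) *\<^sub>R p + t *\<^sub>R q)"
proof -
  have "ct n a A B C p q = 0 \<or> (ct n a A B C p q = (1 - sgn (n \<bullet> (p - a))) / 2 \<and>
      (\<exists>x t. x \<in> open_triangle A B C \<and> 0 \<le> t \<and> t \<le> 1 \<and> x = (1 - t) *\<^sub>R p + t *\<^sub>R q))"
    using ct_nz[of n a A B C p q] assms by auto
  thus "ct n a A B C p q \<ge> 0" "ct n a A B C p q \<le> 1"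
    "ct n a A B C p q = 1 \<Longrightarrow> n \<bullet> (p - a) < 0 \<and>
        (\<exists>x t. x \<in> open_triangle A B C \<and> 0 \<le> t \<and> t \<le> 1 \<and> x = (1 - t) *\<^sub>R p + t *\<^sub>R q)"
    by (auto simp: sgn_if split: if_splits)
qed


lemma seg_rel: fixes x p q a :: "real^3" shows "x = (1 - t) *\<^sub>R p + t *\<^sub>R q \<Longrightarrow> x - a = (1 - t) *\<^sub>R (p - a) + t *\<^sub>R (q - a)"
  by (simp add: vec_eq_iff algebra_simps)

lemma collin_aux:
  fixes g1 g2 P Q t :: real and u a b' c' w :: "real^3"
  assumes "u - a = P *\<^sub>R (b' - a) + Q *\<^sub>R (c' - a)"
    "w - a = (1 - t) *\<^sub>R (b' - a) + t *\<^sub>R (c' - a)"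
    "g1 \<noteq> 0 \<or> g2 \<noteq> 0" "(1 - t) * g1 + t * g2 = 0" "P * g1 + Q * g2 = 0"
  shows "u - a = (P + Q) *\<^sub>R (w - a)"
proof -
  have e: "(1 - t) * Q = t * P"
  proof -
    have "((1 - t) * Q - t * P) * g1 = Q * ((1 - t) * g1 + t * g2) - t * (P * g1 + Q * g2)"
      by (simp add: algebra_simps)
    hence h1: "((1 - t) * Q - t * P) * g1 = 0" using assms by simp
    have "((1 - t) * Q - t * P) * g2 = (1 - t) * (P * g1 + Q * g2) - P * ((1 - t) * g1 + t * g2)"
      by (simp add: algebra_simps)
    hence h2: "((1 - t) * Q - t * P) * g2 = 0" using assms by simp
    show ?thesis using h1 h2 assms(3) by auto
  qed
  have "P = (P + Q) * (1 - t)" "Q = (P + Q) * t" using e by (simp_all add: algebra_simps)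
  hence "u - a = ((P + Q) * (1 - t)) *\<^sub>R (b' - a) + ((P + Q) * t) *\<^sub>R (c' - a)"
    using assms(1) by metis
  also have "\<dots> = (P + Q) *\<^sub>R (w - a)" unfolding assms(2) by (simp add: vec_eq_iff algebra_simps)
  finally show ?thesis .
qed

lemma shared_vertex:
  assumes ind: "indep2 (b - a) (c - a)"
    and x1: "x \<in> open_triangle a b c" and x2: "x = (1 - t) *\<^sub>R b' + t *\<^sub>R c'"
    and y1: "y \<in> open_triangle a b' c'" and y2: "y = (1 - m) *\<^sub>R b + m *\<^sub>R c"
    and mm: "mm \<bullet> (b - a) = 0" "mm \<bullet> (c - a) = 0" "mm \<bullet> (b' - a) \<noteq> 0 \<or> mm \<bullet> (c' - a) \<noteq> 0"
    and nn: "nn \<bullet> (b' - a) = 0" "nn \<bullet> (c' - a) = 0" "nn \<bullet> (b - a) \<noteq> 0 \<or> nn \<bullet> (c - a) \<noteq> 0"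
  shows False
proof -
  obtain \<beta> \<gamma> where bg: "\<beta> > 0" "\<gamma> > 0" "\<beta> + \<gamma> < 1" "x = a + \<beta> *\<^sub>R (b - a) + \<gamma> *\<^sub>R (c - a)"
    using x1 unfolding open_triangle_iff by blast
  obtain \<beta>' \<gamma>' where bg': "\<beta>' > 0" "\<gamma>' > 0" "\<beta>' + \<gamma>' < 1" "y = a + \<beta>' *\<^sub>R (b' - a) + \<gamma>' *\<^sub>R (c' - a)"
    using y1 unfolding open_triangle_iff by blast
  have xa: "x - a = (1 - t) *\<^sub>R (b' - a) + t *\<^sub>R (c' - a)" using seg_rel[OF x2] .
  have ya: "y - a = (1 - m) *\<^sub>R (b - a) + m *\<^sub>R (c - a)" using seg_rel[OF y2] .
  have xa2: "x - a = \<beta> *\<^sub>R (b - a) + \<gamma> *\<^sub>R (c - a)" using bg(4) by simp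
  have ya2: "y - a = \<beta>' *\<^sub>R (b' - a) + \<gamma>' *\<^sub>R (c' - a)" using bg'(4) by simp
  have "mm \<bullet> (x - a) = (1 - t) * (mm \<bullet> (b' - a)) + t * (mm \<bullet> (c' - a))" using xa by (simp add: inner_add_right)
  moreover have "mm \<bullet> (x - a) = 0" using xa2 mm by (simp add: inner_add_right)
  moreover have "mm \<bullet> (y - a) = \<beta>' * (mm \<bullet> (b' - a)) + \<gamma>' * (mm \<bullet> (c' - a))" using ya2 by (simp add: inner_add_right)
  moreover have "mm \<bullet> (y - a) = 0" using ya mm by (simp add: inner_add_right)
  ultimately have k1: "y - a = (\<beta>' + \<gamma>') *\<^sub>R (x - a)"
    using collin_aux[OF ya2 xa mm(3)] by simp
  have "nn \<bullet> (y - a) = (1 - m) * (nn \<bullet> (b - a)) + m * (nn \<bullet> (c - a))" using ya by (simp add: inner_add_right)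
  moreover have "nn \<bullet> (y - a) = 0" using ya2 nn by (simp add: inner_add_right)
  moreover have "nn \<bullet> (x - a) = \<beta> * (nn \<bullet> (b - a)) + \<gamma> * (nn \<bullet> (c - a))" using xa2 by (simp add: inner_add_right)
  moreover have "nn \<bullet> (x - a) = 0" using xa nn by (simp add: inner_add_right)
  ultimately have k2: "x - a = (\<beta> + \<gamma>) *\<^sub>R (y - a)"
    using collin_aux[OF xa2 ya nn(3)] by simp
  have "x - a = ((\<beta> + \<gamma>) * (\<beta>' + \<gamma>')) *\<^sub>R (x - a)" using k2 unfolding k1 scaleR_scaleR .
  hence "(1 - (\<beta> + \<gamma>) * (\<beta>' + \<gamma>')) *\<^sub>R (x - a) = 0" by (simp add: algebra_simps)
  moreover have "(\<beta> + \<gamma>) * (\<beta>' + \<gamma>') < 1"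
    using bg bg' by (smt (verit) mult_le_one mult_less_cancel_left2 mult_pos_pos)
  ultimately have "x - a = 0" by simp
  hence "\<beta> *\<^sub>R (b - a) + \<gamma> *\<^sub>R (c - a) = 0" using xa2 by simp
  thus False using ind bg unfolding indep2_def by auto
qed

lemma other_side:
  assumes "x \<in> open_triangle a b c" "x = (1 - t) *\<^sub>R q0 + t *\<^sub>R q1"
    "mm \<bullet> (q0 - a) = 0" "mm \<bullet> (q1 - a) = 0" "mm \<bullet> (c - a) > 0"
  shows "mm \<bullet> (b - a) < 0"
proof -
  obtain \<beta> \<gamma> where bg: "\<beta> > 0" "\<gamma> > 0" "x = a + \<beta> *\<^sub>R (b - a) + \<gamma> *\<^sub>R (c - a)"
    using assms(1) unfolding open_triangle_iff by blast
  have "mm \<bullet> (x - a) = 0" using seg_rel[OF assms(2), of a] assms(3,4) by (simp add: inner_add_right)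
  moreover have "mm \<bullet> (x - a) = \<beta> * (mm \<bullet> (b - a)) + \<gamma> * (mm \<bullet> (c - a))" using bg(3) by (simp add: inner_add_right)
  ultimately have "\<beta> * (mm \<bullet> (b - a)) = - (\<gamma> * (mm \<bullet> (c - a)))" by simp
  moreover have "\<gamma> * (mm \<bullet> (c - a)) > 0" using bg assms(5) by simp
  ultimately show ?thesis using bg(1)
    by (metis linorder_not_less mult_nonneg_nonneg neg_less_0_iff_less less_le_not_le)
qed


lemma u_form:
  fixes a b c :: "real^3"
  assumes N: "cross3 (b - a) (c - a) \<noteq> 0"
  shows "sgn ((c - midpoint a b) - (((c - midpoint a b) \<bullet> (b - a)) / ((b - a) \<bullet> (b - a))) *\<^sub>R (b - a))
       = (norm (b - a) / norm (cross3 (b - a) (c - a))) *\<^sub>R ((c - a) - (((b - a) \<bullet> (c - a)) / ((b - a) \<bullet> (b - a))) *\<^sub>R (b - a))"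
proof -
  define E where "E = b - a"
  define F where "F = c - a"
  define w where "w = F - ((E \<bullet> F) / (E \<bullet> E)) *\<^sub>R E"
  have E0: "E \<noteq> 0" using N unfolding E_def by auto
  hence EE: "E \<bullet> E > 0" by simp
  have cm: "c - midpoint a b = F - (1/2) *\<^sub>R E" unfolding E_def F_def midpoint_def
    by (simp add: vec_eq_iff algebra_simps)
  have "((c - midpoint a b) \<bullet> (b - a)) / ((b - a) \<bullet> (b - a)) = (E \<bullet> F) / (E \<bullet> E) - 1/2"
  proof -
    have "(F - (1/2) *\<^sub>R E) \<bullet> E = E \<bullet> F - (1/2) * (E \<bullet> E)" by (simp add: inner_diff_left inner_commute[of F E])
    thus ?thesis unfolding cm E_def[symmetric] using EE by (simp add: field_simps)
  qed
  hence "(c - midpoint a b) - (((c - midpoint a b) \<bullet> (b - a)) / ((b - a) \<bullet> (b - a))) *\<^sub>R (b - a)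
     = (c - midpoint a b) - ((E \<bullet> F) / (E \<bullet> E) - 1/2) *\<^sub>R (b - a)" by (simp only:)
  also have "\<dots> = w" unfolding cm w_def E_def[symmetric] by (simp add: vec_eq_iff algebra_simps)
  finally have w1: "(c - midpoint a b) - (((c - midpoint a b) \<bullet> (b - a)) / ((b - a) \<bullet> (b - a))) *\<^sub>R (b - a) = w" .
  have ww: "w \<bullet> w = (F \<bullet> F) - (E \<bullet> F)^2 / (E \<bullet> E)"
    unfolding w_def using EE by (simp add: inner_diff_left inner_diff_right inner_commute power2_eq_square field_simps)
  have lag: "(norm (cross3 E F))^2 = (E \<bullet> E) * (F \<bullet> F) - (E \<bullet> F)^2"
    using norm_cross_dot[of E F] by (simp add: power_mult_distrib power2_norm_eq_inner)
  have "(norm w)^2 = (norm (cross3 E F))^2 / (norm E)^2"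
    using ww lag EE by (simp add: power2_norm_eq_inner field_simps)
  hence nw: "norm w = norm (cross3 E F) / norm E"
    by (metis norm_ge_zero divide_nonneg_nonneg power_divide real_sqrt_abs abs_of_nonneg real_sqrt_pow2 power2_eq_iff_nonneg)
  have "sgn w = (1 / norm w) *\<^sub>R w" by (simp add: sgn_div_norm divide_inverse_commute)
  also have "\<dots> = (norm E / norm (cross3 E F)) *\<^sub>R w" using nw by simp
  finally have sw: "sgn w = (norm E / norm (cross3 E F)) *\<^sub>R w" .
  show ?thesis unfolding w1 using sw by (simp only: w_def E_def F_def)
qed

lemma trig_real:
  fixes nE nF nN g R R' s s' c c' :: real
  assumes pos: "nE > 0" "nF > 0" "nN > 0" "R > 0" "R' > 0" "s > 0" "s' > 0"
    and lag: "nN^2 + g^2 = (nE * nF)^2"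
    and h1: "(R * s / nN) * (1/2 - R' * c' * (nF / nN) * (g / nF^2)) - (R * c * nE / nN) * (R' * s' / nN) < 0"
    and h2: "(1/2 - R * c * (nE / nN) * (g / nE^2)) * (R' * s' / nN) - (R' * c' * nF / nN) * (R * s / nN) < 0"
  shows "s * c' + c * s' > 0"
proof -
  have e1: "(R * s / nN) * (1/2 - R' * c' * (nF / nN) * (g / nF^2)) - (R * c * nE / nN) * (R' * s' / nN)
      = R / (2 * nN^2 * nF) * (s * nN * nF - 2 * R' * (s * c' * g + c * s' * nE * nF))"
    using pos by (simp add: field_simps power2_eq_square)
  have e2: "(1/2 - R * c * (nE / nN) * (g / nE^2)) * (R' * s' / nN) - (R' * c' * nF / nN) * (R * s / nN)
      = R' / (2 * nN^2 * nE) * (s' * nN * nE - 2 * R * (c * s' * g + c' * s * nE * nF))"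
    using pos by (simp add: field_simps power2_eq_square)
  have q1: "R / (2 * nN^2 * nF) > 0" "R' / (2 * nN^2 * nE) > 0" using pos by simp_all
  have k1: "s * nN * nF - 2 * R' * (s * c' * g + c * s' * nE * nF) < 0"
    using h1 e1 q1(1) by (metis mult_pos_pos not_less_iff_gr_or_eq mult_less_0_iff)
  have k2: "s' * nN * nE - 2 * R * (c * s' * g + c' * s * nE * nF) < 0"
    using h2 e2 q1(2) by (metis mult_pos_pos not_less_iff_gr_or_eq mult_less_0_iff)
  have "s * nN * nF > 0" "s' * nN * nE > 0" using pos by simp_all
  hence "R' * (s * c' * g + c * s' * nE * nF) > 0" "R * (c * s' * g + c' * s * nE * nF) > 0"
    using k1 k2 by linarith+
  hence K1: "s * c' * g + c * s' * nE * nF > 0" and K3: "c * s' * g + c' * s * nE * nF > 0"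
    using pos by (simp_all add: zero_less_mult_iff)
  have "nN^2 > 0" using pos by simp
  hence "g^2 < (nE * nF)^2" using lag by linarith
  hence "\<bar>g\<bar> < nE * nF" using pos by (metis abs_of_pos mult_pos_pos power2_less_imp_less abs_ge_zero power2_abs)
  hence gp: "g + nE * nF > 0" by linarith
  have "(g + nE * nF) * (s * c' + c * s') > 0" using K1 K3 by (simp add: algebra_simps)
  thus ?thesis using gp by (simp add: zero_less_mult_iff)
qed


lemma cr_diff_r: "cross3 x (y - z) = cross3 x y - cross3 x z" by (simp add: cross3_simps)
lemma cr_diff_l: "cross3 (y - z) x = cross3 y x - cross3 z x" by (simp add: cross3_simps)
lemma cr_neg_r: "cross3 x (- y) = - cross3 x y" by (simp add: cross3_simps)
lemma cr_self: "cross3 x x = 0" by (simp add: cross3_simps)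

lemma trig_core:
  fixes A B C P Q ez uAB uCA :: "real^3" and R R' \<theta> \<phi> :: real
  assumes Nz: "cross3 (B - A) (C - A) \<noteq> 0"
    and ez: "ez = sgn (cross3 (B - A) (C - A))"
    and uAB: "uAB = sgn ((C - midpoint A B) - (((C - midpoint A B) \<bullet> (B - A)) / ((B - A) \<bullet> (B - A))) *\<^sub>R (B - A))"
    and uCA: "uCA = sgn ((B - midpoint C A) - (((B - midpoint C A) \<bullet> (A - C)) / ((A - C) \<bullet> (A - C))) *\<^sub>R (A - C))"
    and P: "P = midpoint A B + R *\<^sub>R (cos \<theta> *\<^sub>R uAB + sin \<theta> *\<^sub>R ez)"
    and Q: "Q = midpoint C A + R' *\<^sub>R (cos \<phi> *\<^sub>R uCA + sin \<phi> *\<^sub>R ez)"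
    and pos: "R > 0" "R' > 0" "sin \<theta> > 0" "sin \<phi> > 0"
    and c1: "(cross3 (P - A) (B - P)) \<bullet> (Q - A) < 0"
    and c2: "(cross3 (Q - C) (A - Q)) \<bullet> (P - A) < 0"
  shows "sin (\<theta> + \<phi>) > 0"
proof -
  define E where "E = B - A"
  define F where "F = C - A"
  define N where "N = cross3 E F"
  define nE where "nE = norm E"
  define nF where "nF = norm F"
  define nN where "nN = norm N"
  define g where "g = E \<bullet> F"
  have N0: "N \<noteq> 0" using Nz unfolding N_def E_def F_def .
  have E0: "E \<noteq> 0" using N0 unfolding N_def by auto
  have F0: "F \<noteq> 0" using N0 unfolding N_def by auto
  have npos: "nE > 0" "nF > 0" "nN > 0" using E0 F0 N0 unfolding nE_def nF_def nN_def by auto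
  have EE: "E \<bullet> E = nE^2" unfolding nE_def by (simp add: power2_norm_eq_inner)
  have FF: "F \<bullet> F = nF^2" unfolding nF_def by (simp add: power2_norm_eq_inner)
  have NN: "N \<bullet> N = nN^2" unfolding nN_def by (simp add: power2_norm_eq_inner)
  have lag: "nN^2 + g^2 = (nE * nF)^2" unfolding nN_def nE_def nF_def g_def N_def by (rule norm_cross_dot)
  have NCA: "cross3 (A - C) (B - C) = N"
    unfolding N_def E_def F_def using N_cyc[of A C B] N_cyc[of C B A] by simp
  have u1: "uAB = (nE / nN) *\<^sub>R (F - (g / nE^2) *\<^sub>R E)"
    using u_form[of B A C] Nz unfolding uAB E_def[symmetric] F_def[symmetric] N_def[symmetric] nE_def nN_def g_def
    by (simp add: power2_norm_eq_inner)
  have u2: "uCA = (nF / nN) *\<^sub>R (E - (g / nF^2) *\<^sub>R F)"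
  proof -
    have a: "uCA = (norm (A - C) / norm N) *\<^sub>R ((B - C) - (((A - C) \<bullet> (B - C)) / ((A - C) \<bullet> (A - C))) *\<^sub>R (A - C))"
      using u_form[of A C B] NCA N0 unfolding uCA by simp
    have AC: "A - C = - F" "B - C = E - F" unfolding E_def F_def by simp_all
    have co: "((A - C) \<bullet> (B - C)) / ((A - C) \<bullet> (A - C)) = 1 - g / nF^2"
      unfolding AC g_def using FF npos by (simp add: inner_diff_right inner_commute field_simps)
    have "(B - C) - (((A - C) \<bullet> (B - C)) / ((A - C) \<bullet> (A - C))) *\<^sub>R (A - C) = E - (g / nF^2) *\<^sub>R F"
      unfolding co unfolding AC by (simp add: vec_eq_iff algebra_simps)
    moreover have "norm (A - C) = nF" unfolding nF_def AC by simp
    ultimately show ?thesis using a nN_def by simp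
  qed
  have ezN: "ez = (1 / nN) *\<^sub>R N" unfolding ez nN_def N_def E_def F_def by (simp add: sgn_div_norm divide_inverse_commute)
  define aX where "aX = 1/2 - R * cos \<theta> * (nE / nN) * (g / nE^2)"
  define bX where "bX = R * cos \<theta> * nE / nN"
  define cX where "cX = R * sin \<theta> / nN"
  define aY where "aY = R' * cos \<phi> * nF / nN"
  define bY where "bY = 1/2 - R' * cos \<phi> * (nF / nN) * (g / nF^2)"
  define cY where "cY = R' * sin \<phi> / nN"
  have hX: "P - A = aX *\<^sub>R E + bX *\<^sub>R F + cX *\<^sub>R N"
  proof -
    have "midpoint A B - A = (1/2) *\<^sub>R E" unfolding E_def midpoint_def by (simp add: vec_eq_iff algebra_simps)
    hence "P - A = (1/2) *\<^sub>R E + R *\<^sub>R (cos \<theta> *\<^sub>R ((nE / nN) *\<^sub>R (F - (g / nE^2) *\<^sub>R E)) + sin \<theta> *\<^sub>R ((1 / nN) *\<^sub>R N))"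
      unfolding P u1[symmetric] ezN[symmetric] by (simp add: algebra_simps)
    thus ?thesis unfolding aX_def bX_def cX_def by (simp add: vec_eq_iff algebra_simps)
  qed
  have hY: "Q - A = aY *\<^sub>R E + bY *\<^sub>R F + cY *\<^sub>R N"
  proof -
    have "midpoint C A - A = (1/2) *\<^sub>R F" unfolding F_def midpoint_def by (simp add: vec_eq_iff algebra_simps)
    hence "Q - A = (1/2) *\<^sub>R F + R' *\<^sub>R (cos \<phi> *\<^sub>R ((nF / nN) *\<^sub>R (E - (g / nF^2) *\<^sub>R F)) + sin \<phi> *\<^sub>R ((1 / nN) *\<^sub>R N))"
      unfolding Q u2[symmetric] ezN[symmetric] by (simp add: algebra_simps)
    thus ?thesis unfolding aY_def bY_def cY_def by (simp add: vec_eq_iff algebra_simps)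
  qed
  have "cross3 (P - A) (B - P) = cross3 (P - A) E"
  proof -
    have "B - P = E - (P - A)" unfolding E_def by simp
    thus ?thesis by (simp only: cr_diff_r cr_self diff_zero)
  qed
  hence d1: "(cross3 (P - A) (B - P)) \<bullet> (Q - A) = (N \<bullet> N) * (cX * bY - bX * cY)"
    unfolding hX hY using det_comb(1)[OF N_def] by simp
  have "cross3 (Q - C) (A - Q) = cross3 F (Q - A)"
  proof -
    have "Q - C = (Q - A) - F" "A - Q = - (Q - A)" unfolding F_def by simp_all
    thus ?thesis by (simp only: cr_diff_l cr_neg_r cr_self) simp
  qed
  hence d2: "(cross3 (Q - C) (A - Q)) \<bullet> (P - A) = (N \<bullet> N) * (aX * cY - aY * cX)"
    unfolding hX hY using det_comb(2)[OF N_def] by simp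
  have NNp: "N \<bullet> N > 0" using N0 by simp
  have h1: "cX * bY - bX * cY < 0" using c1 d1 NNp by (simp add: mult_less_0_iff)
  have h2: "aX * cY - aY * cX < 0" using c2 d2 NNp by (simp add: mult_less_0_iff)
  have "sin \<theta> * cos \<phi> + cos \<theta> * sin \<phi> > 0"
    apply (rule trig_real[OF npos pos lag])
    using h1 h2 unfolding aX_def bX_def cX_def aY_def bY_def cY_def by (simp_all add: algebra_simps)
  thus ?thesis by (simp add: sin_add)
qed


lemma angle_unique:
  fixes x y :: real
  assumes "0 \<le> x" "x < 2*pi" "0 \<le> y" "y < 2*pi" "sin y = sin x" "cos y = cos x"
  shows "y = x"
proof -
  obtain n :: int where n: "y = x + 2 * pi * n" using assms(5,6) sin_cos_eq_iff by blast
  have "2 * pi * n < 2 * pi" "2 * pi * n > - 2 * pi" using n assms(1-4) by linarith+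
  have "\<not> (n \<ge> 1)"
  proof
    assume "n \<ge> 1" hence "real_of_int n \<ge> 1" by simp
    hence "2 * pi * n \<ge> 2 * pi * 1" using pi_gt_zero by (intro mult_left_mono) auto
    thus False using \<open>2 * pi * n < 2 * pi\<close> by simp
  qed
  moreover have "\<not> (n \<le> -1)"
  proof
    assume "n \<le> -1" hence "real_of_int n \<le> -1" by simp
    hence "2 * pi * n \<le> 2 * pi * (-1)" using pi_gt_zero by (intro mult_left_mono) auto
    thus False using \<open>2 * pi * n > - 2 * pi\<close> by simp
  qed
  ultimately have "n = 0" by linarith
  thus ?thesis using n by simp
qed

definition uform :: "real^3 \<Rightarrow> real^3 \<Rightarrow> real^3 \<Rightarrow> real^3" where
  "uform a b c = sgn ((c - midpoint a b) - (((c - midpoint a b) \<bullet> (b - a)) / ((b - a) \<bullet> (b - a))) *\<^sub>R (b - a))"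

lemma uform_props:
  fixes a b c :: "real^3"
  assumes Nz: "cross3 (b - a) (c - a) \<noteq> 0"
  shows "uform a b c \<bullet> (b - a) = 0" "uform a b c \<bullet> uform a b c = 1"
    "uform a b c \<bullet> cross3 (b - a) (c - a) = 0"
    "c - a = (norm (cross3 (b - a) (c - a)) / norm (b - a)) *\<^sub>R uform a b c
             + (((b - a) \<bullet> (c - a)) / ((b - a) \<bullet> (b - a))) *\<^sub>R (b - a)"
proof -
  define E where "E = b - a"
  define F where "F = c - a"
  define N where "N = cross3 E F"
  have N0: "N \<noteq> 0" using Nz unfolding N_def E_def F_def .
  have E0: "E \<noteq> 0" using N0 unfolding N_def by auto
  have u: "uform a b c = (norm E / norm N) *\<^sub>R (F - ((E \<bullet> F) / (E \<bullet> E)) *\<^sub>R E)"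
    unfolding uform_def using u_form[OF Nz] unfolding E_def F_def N_def .
  have EE: "E \<bullet> E > 0" using E0 by simp
  show "uform a b c \<bullet> (b - a) = 0"
    unfolding u E_def[symmetric] using EE by (simp add: inner_diff_right inner_commute)
  show "uform a b c \<bullet> cross3 (b - a) (c - a) = 0"
    unfolding u E_def[symmetric] F_def[symmetric] N_def[symmetric] unfolding N_def
    by (simp add: inner_diff_left dot_cross_self)
  have "(norm (sgn ((c - midpoint a b) - (((c - midpoint a b) \<bullet> (b - a)) / ((b - a) \<bullet> (b - a))) *\<^sub>R (b - a))))^2 = 1"
  proof -
    have "(c - midpoint a b) - (((c - midpoint a b) \<bullet> (b - a)) / ((b - a) \<bullet> (b - a))) *\<^sub>R (b - a) \<noteq> 0"
    proof
      assume h: "(c - midpoint a b) - (((c - midpoint a b) \<bullet> (b - a)) / ((b - a) \<bullet> (b - a))) *\<^sub>R (b - a) = 0"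
      have "uform a b c = 0" unfolding uform_def h by simp
      hence "F - ((E \<bullet> F) / (E \<bullet> E)) *\<^sub>R E = 0" using u N0 E0 by simp
      hence "F = ((E \<bullet> F) / (E \<bullet> E)) *\<^sub>R E" by simp
      hence "N = 0" unfolding N_def by (metis cross_mult_right cross_refl scaleR_zero_right)
      thus False using N0 by simp
    qed
    thus ?thesis by (simp add: norm_sgn)
  qed
  thus "uform a b c \<bullet> uform a b c = 1" unfolding uform_def by (simp add: power2_norm_eq_inner)
  have nN: "norm N > 0" "norm E > 0" using N0 E0 by auto
  show "c - a = (norm (cross3 (b - a) (c - a)) / norm (b - a)) *\<^sub>R uform a b c
             + (((b - a) \<bullet> (c - a)) / ((b - a) \<bullet> (b - a))) *\<^sub>R (b - a)"
    unfolding u E_def[symmetric] F_def[symmetric] N_def[symmetric] using nN by simp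
qed

lemma theta_rep:
  fixes a b c p :: "real^3"
  assumes Nz: "cross3 (b - a) (c - a) \<noteq> 0"
    and pa: "norm (p - a) = 1" and pb: "norm (p - b) = 1" and d2: "dist b a < 2"
  shows "\<exists>!\<theta>. 0 \<le> \<theta> \<and> \<theta> < 2 * pi \<and>
     p = midpoint a b + (sqrt (4 - (dist b a)\<^sup>2) / 2) *\<^sub>R (cos \<theta> *\<^sub>R uform a b c + sin \<theta> *\<^sub>R sgn (cross3 (b - a) (c - a)))"
proof -
  define E where "E = b - a"
  define F where "F = c - a"
  define N where "N = cross3 E F"
  define u where "u = uform a b c"
  define ez where "ez = sgn N"
  define R where "R = sqrt (4 - (dist b a)\<^sup>2) / 2"
  define X where "X = p - midpoint a b"
  have N0: "N \<noteq> 0" using Nz unfolding N_def E_def F_def .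
  have E0: "E \<noteq> 0" using N0 unfolding N_def by auto
  note up = uform_props[OF Nz, folded E_def F_def N_def u_def]
  have dE: "dist b a = norm E" unfolding E_def by (simp add: dist_norm)
  have d4: "(dist b a)^2 < 4"
  proof -
    have "dist b a * dist b a < 2 * 2" using d2 zero_le_dist[of b a] by (intro mult_strict_mono) auto
    thus ?thesis by (simp add: power2_eq_square)
  qed
  have Rpos: "R > 0" unfolding R_def using d4 by simp
  have R2: "R^2 = 1 - (E \<bullet> E) / 4"
    unfolding R_def dE using d4 dE by (simp add: power_divide power2_norm_eq_inner)
  have pE: "(p - a) \<bullet> E = (E \<bullet> E) / 2"
  proof -
    have pbe: "p - b = (p - a) - E" unfolding E_def by simp
    have "(p - b) \<bullet> (p - b) = (p - a) \<bullet> (p - a) - 2 * ((p - a) \<bullet> E) + E \<bullet> E"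
      unfolding pbe by (simp add: inner_diff_left inner_diff_right inner_commute)
    moreover have "(p - b) \<bullet> (p - b) = 1" "(p - a) \<bullet> (p - a) = 1" using pa pb by (simp_all add: dot_square_norm)
    ultimately show ?thesis by simp
  qed
  have Xa: "X = (p - a) - (1/2) *\<^sub>R E" unfolding X_def E_def midpoint_def by (simp add: vec_eq_iff algebra_simps)
  have XE: "X \<bullet> E = 0" unfolding Xa using pE by (simp add: inner_diff_left)
  have XX: "X \<bullet> X = R^2"
  proof -
    have "X \<bullet> X = (p - a) \<bullet> (p - a) - (p - a) \<bullet> E + (E \<bullet> E) / 4" unfolding Xa
      by (simp add: inner_diff_left inner_diff_right inner_commute)
    also have "\<dots> = 1 - (E \<bullet> E) / 4" using pE pa by (simp add: dot_square_norm)
    finally show ?thesis using R2 by simp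
  qed
  have ezN: "ez = (1 / norm N) *\<^sub>R N" unfolding ez_def by (simp add: sgn_div_norm divide_inverse_commute)
  have ezE: "ez \<bullet> E = 0" unfolding ezN N_def by (simp add: dot_cross_self)
  have ezez: "ez \<bullet> ez = 1" unfolding ezN using N0 by (simp add: dot_square_norm power2_eq_square)
  have uez: "u \<bullet> ez = 0" unfolding ezN using up(3) by simp
  define Y where "Y = X - (X \<bullet> u) *\<^sub>R u - (X \<bullet> ez) *\<^sub>R ez"
  have YE: "Y \<bullet> E = 0" unfolding Y_def using XE up(1) ezE by (simp add: inner_diff_left)
  have Yu: "Y \<bullet> u = 0" unfolding Y_def using up(2) uez by (simp add: inner_diff_left inner_diff_right inner_commute)
  have Yez: "Y \<bullet> ez = 0" unfolding Y_def using ezez uez by (simp add: inner_diff_left inner_diff_right inner_commute)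
  have YF: "Y \<bullet> F = 0"
  proof -
    have "Y \<bullet> F = Y \<bullet> ((norm N / norm E) *\<^sub>R u + (E \<bullet> F / (E \<bullet> E)) *\<^sub>R E)"
      using arg_cong[OF up(4), of "\<lambda>z. Y \<bullet> z"] .
    thus ?thesis using YE Yu by (simp add: inner_add_right)
  qed
  have YN: "Y \<bullet> N = 0"
  proof -
    have "N = norm N *\<^sub>R ez" unfolding ezN using N0 by simp
    thus ?thesis using Yez by (metis inner_scaleR_right mult_zero_right)
  qed
  have Y0: "Y = 0" using perp_zero[OF YE YF _ ] YN N0 unfolding N_def by auto
  hence Xdec: "X = (X \<bullet> u) *\<^sub>R u + (X \<bullet> ez) *\<^sub>R ez" unfolding Y_def by (simp add: algebra_simps)
  have sq: "(X \<bullet> u)^2 + (X \<bullet> ez)^2 = R^2"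
  proof -
    have "X \<bullet> X = (X \<bullet> u)^2 * (u \<bullet> u) + (X \<bullet> ez)^2 * (ez \<bullet> ez) + 2 * (X \<bullet> u) * (X \<bullet> ez) * (u \<bullet> ez)"
      by (subst (1 2) Xdec) (simp add: inner_add_left inner_add_right inner_commute power2_eq_square algebra_simps)
    thus ?thesis using XX up(2) ezez uez by simp
  qed
  have "(X \<bullet> u / R)^2 + (X \<bullet> ez / R)^2 = 1" using sq Rpos by (simp add: power_divide field_simps)
  then obtain t where t: "0 \<le> t" "t < 2*pi" "X \<bullet> u / R = cos t" "X \<bullet> ez / R = sin t"
    by (rule sincos_total_2pi)
  have rep: "\<And>th. p = midpoint a b + R *\<^sub>R (cos th *\<^sub>R u + sin th *\<^sub>R ez) \<longleftrightarrow> X = R *\<^sub>R (cos th *\<^sub>R u + sin th *\<^sub>R ez)"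
    unfolding X_def by (metis add_diff_cancel_left' diff_add_cancel add.commute)
  have ex: "p = midpoint a b + R *\<^sub>R (cos t *\<^sub>R u + sin t *\<^sub>R ez)"
  proof -
    have "X \<bullet> u = R * cos t" "X \<bullet> ez = R * sin t" using t Rpos by (simp_all add: field_simps)
    thus ?thesis unfolding rep using Xdec by (simp add: algebra_simps)
  qed
  have un: "th = t" if "0 \<le> th" "th < 2 * pi" "p = midpoint a b + R *\<^sub>R (cos th *\<^sub>R u + sin th *\<^sub>R ez)" for th
  proof -
    have X2: "X = R *\<^sub>R (cos th *\<^sub>R u + sin th *\<^sub>R ez)" using that(3) rep by blast
    have "X \<bullet> u = R * cos th" unfolding X2 using up(2) uez by (simp add: inner_add_left inner_add_right inner_commute)
    moreover have "X \<bullet> ez = R * sin th" unfolding X2 using ezez uez by (simp add: inner_add_left inner_add_right inner_commute)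
    ultimately have "cos th = cos t" "sin th = sin t" using t Rpos by (simp_all add: field_simps)
    thus ?thesis using angle_unique that t by blast
  qed
  show ?thesis unfolding R_def[symmetric] u_def[symmetric] ez_def[symmetric] N_def[symmetric] E_def[symmetric] F_def[symmetric]
    using ex un t by blast
qed

lemma theta_height:
  fixes a b c p :: "real^3"
  assumes Nz: "cross3 (b - a) (c - a) \<noteq> 0"
    and p: "p = midpoint a b + R *\<^sub>R (cos th *\<^sub>R uform a b c + sin th *\<^sub>R sgn (cross3 (b - a) (c - a)))"
  shows "cross3 (b - a) (c - a) \<bullet> (p - a) = R * sin th * norm (cross3 (b - a) (c - a))"
proof -
  define N where "N = cross3 (b - a) (c - a)"
  have N0: "N \<noteq> 0" using Nz unfolding N_def .
  have m: "N \<bullet> (midpoint a b - a) = 0"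
  proof -
    have "midpoint a b - a = (1/2) *\<^sub>R (b - a)" unfolding midpoint_def by (simp add: vec_eq_iff algebra_simps)
    thus ?thesis unfolding N_def by (simp add: dot_cross_self)
  qed
  have uN: "N \<bullet> uform a b c = 0" using uform_props(3)[OF Nz] unfolding N_def by (simp add: inner_commute)
  have eN: "N \<bullet> sgn N = norm N" by (cases "N = 0") (simp_all add: sgn_div_norm inner_scaleR_right dot_square_norm power2_eq_square divide_inverse)
  have eq: "p - a = (midpoint a b - a) + R *\<^sub>R (cos th *\<^sub>R uform a b c + sin th *\<^sub>R sgn N)" unfolding p N_def by simp
  have "N \<bullet> (p - a) = N \<bullet> (midpoint a b - a) + R * (cos th * (N \<bullet> uform a b c) + sin th * (N \<bullet> sgn N))"
    unfolding eq by (simp add: inner_add_right)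
  hence "N \<bullet> (p - a) = R * sin th * (N \<bullet> sgn N)" using m uN by simp
  thus ?thesis using eN unfolding N_def by simp
qed


lemma tri_plane:
  fixes A B C :: "real^3"
  shows "cross3 (B - A) (C - B) \<bullet> A = cross3 (B - A) (C - B) \<bullet> B"
    "cross3 (B - A) (C - B) \<bullet> C = cross3 (B - A) (C - B) \<bullet> B"
proof -
  have "cross3 (B - A) (C - B) \<bullet> (B - A) = 0" "cross3 (B - A) (C - B) \<bullet> (C - B) = 0"
    by (simp_all add: dot_cross_self)
  thus "cross3 (B - A) (C - B) \<bullet> A = cross3 (B - A) (C - B) \<bullet> B"
    "cross3 (B - A) (C - B) \<bullet> C = cross3 (B - A) (C - B) \<bullet> B"
    by (simp_all add: inner_diff_right)
qed

lemma delta_shape: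
  assumes ind: "indep2 (B - A) (C - A)" and n: "n = cross3 (B - A) (C - B)"
  shows "ct n A A B C A B = 0" "ct n A A B C B C = 0" "ct n A A B C C q = 0" "ct n A A B C q A = 0"
proof -
  have pl: "n \<bullet> A = n \<bullet> B" "n \<bullet> C = n \<bullet> B" unfolding n by (rule tri_plane)+
  note nv = indep_not_vertex[OF ind]
  show "ct n A A B C A B = 0" using pl by (intro ct_plane) (simp add: inner_diff_right)
  show "ct n A A B C B C = 0" using pl by (intro ct_plane) (simp add: inner_diff_right)
  show "ct n A A B C C q = 0" using pl nv by (intro ct_start) (simp_all add: inner_diff_right)
  show "ct n A A B C q A = 0" using pl nv by (intro ct_end) (simp_all add: inner_diff_right)
qed


lemma tri_below:
  assumes "NN \<bullet> (B - A) < 0" "NN \<bullet> (C - A) = 0" "NN \<bullet> (p - A) \<ge> 0" "NN \<bullet> (q - A) \<ge> 0"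
  shows "ct n a A B C p q = 0"
proof (rule ccontr)
  assume "ct n a A B C p q \<noteq> 0"
  then obtain x t where x: "x \<in> open_triangle A B C" "0 \<le> t" "t \<le> 1" "x = (1 - t) *\<^sub>R p + t *\<^sub>R q"
    using ct_nz by blast
  obtain \<beta> \<gamma> where bg: "\<beta> > 0" "\<gamma> > 0" "x = A + \<beta> *\<^sub>R (B - A) + \<gamma> *\<^sub>R (C - A)"
    using x(1) unfolding open_triangle_iff by blast
  have "NN \<bullet> (x - A) = \<beta> * (NN \<bullet> (B - A))" using bg(3) assms(2) by (simp add: inner_add_right)
  moreover have "\<beta> * (NN \<bullet> (B - A)) < 0" using bg(1) assms(1) by (simp add: mult_pos_neg)
  moreover have "NN \<bullet> (x - A) = (1 - t) * (NN \<bullet> (p - A)) + t * (NN \<bullet> (q - A))"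
    using seg_rel[OF x(4), of A] by (simp add: inner_add_right)
  moreover have "(1 - t) * (NN \<bullet> (p - A)) + t * (NN \<bullet> (q - A)) \<ge> 0"
    using x(2,3) assms(3,4) by simp
  ultimately show False by linarith
qed

lemma tri_flat_zero:
  fixes NN :: "real^3"
  assumes NN0: "NN \<noteq> 0" and h: "NN \<bullet> (B - A) = 0" "NN \<bullet> (C - B) = 0"
    and n: "n = cross3 (B - A) (C - B)"
    and q: "NN \<bullet> (q - A) = 0" and p: "NN \<bullet> (p - A) > 0" and r: "NN \<bullet> (r - A) > 0"
  shows "ct n A A B C p q + ct n A A B C q r = 0"
proof -
  define k where "k = (n \<bullet> NN) / (NN \<bullet> NN)"
  have NNp: "NN \<bullet> NN > 0" using NN0 by simp
  have par: "(NN \<bullet> NN) *\<^sub>R n = (n \<bullet> NN) *\<^sub>R NN"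
    unfolding n using cross_par[of "B - A" NN "C - B"] h by (simp add: inner_commute)
  have kw: "n \<bullet> w = k * (NN \<bullet> w)" for w
  proof -
    have "(NN \<bullet> NN) * (n \<bullet> w) = (n \<bullet> NN) * (NN \<bullet> w)"
      using arg_cong[OF par, of "\<lambda>z. z \<bullet> w"] by simp
    thus ?thesis unfolding k_def using NNp by (simp add: field_simps)
  qed
  show ?thesis
    by (rule ct_flat[where k = k and zp = "NN \<bullet> (p - A)" and zr = "NN \<bullet> (r - A)"])
      (simp_all add: kw q p r)
qed


lemma prod3:
  fixes a b c :: real
  assumes "\<bar>a\<bar> \<le> 1" "\<bar>b\<bar> \<le> 1" "\<bar>c\<bar> \<le> 1" "a * b * c = -1"
  shows "\<bar>a\<bar> = 1" "\<bar>b\<bar> = 1" "\<bar>c\<bar> = 1"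
proof -
  have p: "\<bar>a\<bar> * \<bar>b\<bar> * \<bar>c\<bar> = 1" using assms(4) by (metis abs_mult abs_neg_one)
  have bc: "\<bar>b\<bar> * \<bar>c\<bar> \<le> 1" using assms by (simp add: mult_le_one)
  have ab: "\<bar>a\<bar> * \<bar>b\<bar> \<le> 1" using assms by (simp add: mult_le_one)
  have ac: "\<bar>a\<bar> * \<bar>c\<bar> \<le> 1" using assms by (simp add: mult_le_one)
  show "\<bar>a\<bar> = 1"
  proof (rule ccontr)
    assume "\<bar>a\<bar> \<noteq> 1" hence "\<bar>a\<bar> < 1" using assms(1) by simp
    moreover have "\<bar>a\<bar> * (\<bar>b\<bar> * \<bar>c\<bar>) \<le> \<bar>a\<bar>" using bc by (intro mult_left_le) auto
    ultimately have "\<bar>a\<bar> * (\<bar>b\<bar> * \<bar>c\<bar>) < 1" by linarith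
    thus False using p by (simp add: mult.assoc)
  qed
  show "\<bar>b\<bar> = 1"
  proof (rule ccontr)
    assume "\<bar>b\<bar> \<noteq> 1" hence "\<bar>b\<bar> < 1" using assms(2) by simp
    moreover have "\<bar>b\<bar> * (\<bar>a\<bar> * \<bar>c\<bar>) \<le> \<bar>b\<bar>" using ac by (intro mult_left_le) auto
    ultimately have "\<bar>b\<bar> * (\<bar>a\<bar> * \<bar>c\<bar>) < 1" by linarith
    thus False using p by (simp add: algebra_simps)
  qed
  show "\<bar>c\<bar> = 1"
  proof (rule ccontr)
    assume "\<bar>c\<bar> \<noteq> 1" hence "\<bar>c\<bar> < 1" using assms(3) by simp
    moreover have "\<bar>c\<bar> * (\<bar>a\<bar> * \<bar>b\<bar>) \<le> \<bar>c\<bar>" using ab by (intro mult_left_le) auto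
    ultimately have "\<bar>c\<bar> * (\<bar>a\<bar> * \<bar>b\<bar>) < 1" by linarith
    thus False using p by (simp add: algebra_simps)
  qed
qed

lemma sin_pos_range:
  fixes x :: real
  assumes "0 \<le> x" "x < 2 * pi" "sin x > 0"
  shows "0 < x \<and> x < pi"
proof -
  have "x \<noteq> 0" using assms(3) by auto
  moreover have "\<not> (x \<ge> pi)" using sin_le_zero[of x] assms by auto
  ultimately show ?thesis using assms(1) by auto
qed

lemma sum_range:
  fixes x y :: real
  assumes "0 < x" "x < pi" "0 < y" "y < pi" "sin (x + y) > 0"
  shows "x + y < pi"
proof (rule ccontr)
  assume "\<not> x + y < pi"
  hence "sin (x + y) \<le> 0" using sin_le_zero[of "x + y"] assms(2,4) by linarith
  thus False using assms(5) by linarith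
qed


lemma aa_theta_prop:
  fixes v :: "nat \<Rightarrow> real^3" and i :: nat
  defines "a \<equiv> hv v (2*i - 1)" and "b \<equiv> hv v (2*i + 1)" and "c \<equiv> hv v (2*i + 3)"
  assumes Nz: "cross3 (b - a) (c - a) \<noteq> 0"
    and ez: "aa_ez v = sgn (cross3 (b - a) (c - a))"
    and pa: "norm (hv v (2*i) - a) = 1" and pb: "norm (hv v (2*i) - b) = 1" and d2: "dist b a < 2"
  shows "0 \<le> aa_theta v i \<and> aa_theta v i < 2 * pi \<and>
     hv v (2*i) = midpoint a b + (sqrt (4 - (dist b a)\<^sup>2) / 2) *\<^sub>R
        (cos (aa_theta v i) *\<^sub>R uform a b c + sin (aa_theta v i) *\<^sub>R sgn (cross3 (b - a) (c - a)))"
proof -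
  have e: "aa_theta v i = (THE \<theta>. 0 \<le> \<theta> \<and> \<theta> < 2 * pi \<and>
     hv v (2*i) = midpoint a b + (sqrt (4 - (dist b a)\<^sup>2) / 2) *\<^sub>R
        (cos \<theta> *\<^sub>R uform a b c + sin \<theta> *\<^sub>R sgn (cross3 (b - a) (c - a))))"
    unfolding aa_theta_def aa_mid_def aa_d_def aa_u_def uform_def ez Let_def a_def b_def c_def ..
  show ?thesis unfolding e by (rule theI'[OF theta_rep[OF Nz pa pb d2]])
qed



theorem mainTheorem9:
  fixes v :: "nat \<Rightarrow> real^3"
  assumes "equilateral_hexagon v"
    and "embedded_hexagon v"
    and "aa_defined v"
    and "J v = (-1, 1)"
  shows "(\<forall>i\<in>{1,2,3}. 0 < aa_theta v i \<and> aa_theta v i < pi) \<and>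
         aa_theta v 1 + aa_theta v 2 < pi \<and>
         aa_theta v 1 + aa_theta v 3 < pi \<and>
         aa_theta v 2 + aa_theta v 3 < pi"
proof -
  have hv7: "hv v 7 = hv v 1" and hv9: "hv v 9 = hv v 3" by (simp_all add: hv_def)
  have EQ: "\<And>i. i \<in> {1..6} \<Longrightarrow> dist (hv v i) (hv v (i + 1)) = 1"
    using assms(1) unfolding equilateral_hexagon_def by blast
  have e1: "norm (hv v 2 - hv v 1) = 1" using EQ[of 1] by (simp add: dist_norm norm_minus_commute numeral_eq_Suc)
  have e2: "norm (hv v 3 - hv v 2) = 1" using EQ[of 2] by (simp add: dist_norm norm_minus_commute numeral_eq_Suc)
  have e3: "norm (hv v 4 - hv v 3) = 1" using EQ[of 3] by (simp add: dist_norm norm_minus_commute numeral_eq_Suc)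
  have e4: "norm (hv v 5 - hv v 4) = 1" using EQ[of 4] by (simp add: dist_norm norm_minus_commute numeral_eq_Suc)
  have e5: "norm (hv v 6 - hv v 5) = 1" using EQ[of 5] by (simp add: dist_norm norm_minus_commute numeral_eq_Suc)
  have e6: "norm (hv v 1 - hv v 6) = 1" using EQ[of 6] hv7 by (simp add: dist_norm norm_minus_commute numeral_eq_Suc)
  have e1': "norm (hv v 2 - hv v 3) = 1" using e2 by (simp add: norm_minus_commute)
  have e3': "norm (hv v 4 - hv v 5) = 1" using e4 by (simp add: norm_minus_commute)
  have e5': "norm (hv v 6 - hv v 1) = 1" using e6 by (simp add: norm_minus_commute)
  have ncol: "\<not> collinear {hv v 1, hv v 3, hv v 5}" using assms(3) unfolding aa_defined_def by blast
  have ad: "\<forall>i\<in>{1,2,3}. 0 < aa_d v i \<and> aa_d v i < 2" using assms(3) unfolding aa_defined_def by blast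
  have d1: "0 < dist (hv v 3) (hv v 1)" "dist (hv v 3) (hv v 1) < 2" using ad unfolding aa_d_def by auto
  have d2: "0 < dist (hv v 5) (hv v 3)" "dist (hv v 5) (hv v 3) < 2" using ad unfolding aa_d_def by auto
  have d3: "0 < dist (hv v 1) (hv v 5)" "dist (hv v 1) (hv v 5) < 2" using ad hv7 unfolding aa_d_def by auto
  define N where "N = cross3 (hv v 3 - hv v 1) (hv v 5 - hv v 1)"
  have N0: "N \<noteq> 0"
  proof
    assume "N = 0"
    hence "collinear {0, hv v 3 - hv v 1, hv v 5 - hv v 1}" unfolding N_def using cross_eq_0 by blast
    hence "collinear {hv v 3, hv v 1, hv v 5}" using collinear_3[of "hv v 3" "hv v 1" "hv v 5"] by simp
    thus False using ncol by (simp add: insert_commute)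
  qed
  have N2: "cross3 (hv v 5 - hv v 3) (hv v 1 - hv v 3) = N" unfolding N_def by (rule N_cyc)
  have N3: "cross3 (hv v 1 - hv v 5) (hv v 3 - hv v 5) = N" unfolding N_def using N_cyc[of "hv v 1" "hv v 5" "hv v 3"] N_cyc[of "hv v 5" "hv v 3" "hv v 1"] by simp
  have z3: "N \<bullet> hv v 3 = N \<bullet> hv v 1" and z5: "N \<bullet> hv v 5 = N \<bullet> hv v 1"
  proof -
    have "N \<bullet> (hv v 3 - hv v 1) = 0" "N \<bullet> (hv v 5 - hv v 1) = 0" unfolding N_def by (simp_all add: dot_cross_self)
    thus "N \<bullet> hv v 3 = N \<bullet> hv v 1" "N \<bullet> hv v 5 = N \<bullet> hv v 1" by (simp_all add: inner_diff_right)
  qed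
  have Jp: "Delta v 2 * Delta v 4 * Delta v 6 = -1"
    and Js: "(Delta v 2)\<^sup>2 * (Delta v 4)\<^sup>2 * (Delta v 6)\<^sup>2 * curl v = 1"
    using assms(4) unfolding J_def by simp_all
  have "curl v = 1"
  proof -
    have "(Delta v 2)\<^sup>2 * (Delta v 4)\<^sup>2 * (Delta v 6)\<^sup>2 = (Delta v 2 * Delta v 4 * Delta v 6)\<^sup>2"
      by (simp add: power_mult_distrib)
    thus ?thesis using Js Jp by simp
  qed
  hence Z2: "N \<bullet> hv v 2 > N \<bullet> hv v 1" unfolding curl_def N_def[symmetric]
    by (simp add: sgn_1_pos inner_diff_right)
  define n2 where "n2 = cross3 (hv v 2 - hv v 1) (hv v 3 - hv v 2)"
  define n4 where "n4 = cross3 (hv v 4 - hv v 3) (hv v 5 - hv v 4)"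
  define n6 where "n6 = cross3 (hv v 6 - hv v 5) (hv v 1 - hv v 6)"
  have tn: "tri_normal v 2 = n2" "tri_normal v 4 = n4" "tri_normal v 6 = n6"
    unfolding tri_normal_def n2_def n4_def n6_def using hv7 by simp_all
  have pl2: "n2 \<bullet> hv v 1 = n2 \<bullet> hv v 2" "n2 \<bullet> hv v 3 = n2 \<bullet> hv v 2" unfolding n2_def by (rule tri_plane)+
  have pl4: "n4 \<bullet> hv v 3 = n4 \<bullet> hv v 4" "n4 \<bullet> hv v 5 = n4 \<bullet> hv v 4" unfolding n4_def by (rule tri_plane)+
  have pl6: "n6 \<bullet> hv v 5 = n6 \<bullet> hv v 6" "n6 \<bullet> hv v 1 = n6 \<bullet> hv v 6" unfolding n6_def by (rule tri_plane)+
  have ind2: "indep2 (hv v 2 - hv v 1) (hv v 3 - hv v 1)"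
    using indep_len[OF e1 e2] d1 by (simp add: dist_norm)
  have ind4: "indep2 (hv v 4 - hv v 3) (hv v 5 - hv v 3)"
    using indep_len[OF e3 e4] d2 by (simp add: dist_norm)
  have ind6: "indep2 (hv v 6 - hv v 5) (hv v 1 - hv v 5)"
    using indep_len[OF e5 e6] d3 by (simp add: dist_norm)
  have D2: "Delta v 2 = ct n2 (hv v 1) (hv v 1) (hv v 2) (hv v 3) (hv v 4) (hv v 5)
                      + ct n2 (hv v 1) (hv v 1) (hv v 2) (hv v 3) (hv v 5) (hv v 6)"
  proof -
    note z = delta_shape[OF ind2 n2_def]
    show ?thesis unfolding Delta_expand tn Let_def using z hv7 by simp
  qed
  have D4: "Delta v 4 = ct n4 (hv v 3) (hv v 3) (hv v 4) (hv v 5) (hv v 6) (hv v 1)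
                      + ct n4 (hv v 3) (hv v 3) (hv v 4) (hv v 5) (hv v 1) (hv v 2)"
  proof -
    note z = delta_shape[OF ind4 n4_def]
    show ?thesis unfolding Delta_expand tn Let_def using z hv7 by simp
  qed
  have D6: "Delta v 6 = ct n6 (hv v 5) (hv v 5) (hv v 6) (hv v 1) (hv v 2) (hv v 3)
                      + ct n6 (hv v 5) (hv v 5) (hv v 6) (hv v 1) (hv v 3) (hv v 4)"
  proof -
    note z = delta_shape[OF ind6 n6_def]
    show ?thesis unfolding Delta_expand tn Let_def using z hv7 by simp
  qed
  have Dnz: "Delta v 2 \<noteq> 0" "Delta v 4 \<noteq> 0" "Delta v 6 \<noteq> 0" using Jp by auto
  have Z46: "N \<bullet> hv v 4 > N \<bullet> hv v 1 \<or> N \<bullet> hv v 6 > N \<bullet> hv v 1"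
  proof (rule ccontr)
    assume "\<not> ?thesis"
    hence h: "N \<bullet> hv v 4 \<le> N \<bullet> hv v 1" "N \<bullet> hv v 6 \<le> N \<bullet> hv v 1" by auto
    have "ct n2 (hv v 1) (hv v 1) (hv v 2) (hv v 3) (hv v 4) (hv v 5) = 0"
      by (rule tri_below[where NN = "- N"]) (use Z2 z3 z5 h in \<open>simp_all add: inner_diff_right\<close>)
    moreover have "ct n2 (hv v 1) (hv v 1) (hv v 2) (hv v 3) (hv v 5) (hv v 6) = 0"
      by (rule tri_below[where NN = "- N"]) (use Z2 z3 z5 h in \<open>simp_all add: inner_diff_right\<close>)
    ultimately show False using D2 Dnz(1) by simp
  qed
  have Z4: "N \<bullet> hv v 4 > N \<bullet> hv v 1"
  proof (rule ccontr)
    assume "\<not> ?thesis"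
    hence h: "N \<bullet> hv v 4 \<le> N \<bullet> hv v 1" by auto
    hence h6: "N \<bullet> hv v 6 > N \<bullet> hv v 1" using Z46 by auto
    show False
    proof (cases "N \<bullet> hv v 4 < N \<bullet> hv v 1")
      case True
      have "ct n4 (hv v 3) (hv v 3) (hv v 4) (hv v 5) (hv v 6) (hv v 1) = 0"
        by (rule tri_below[where NN = N]) (use Z2 z3 z5 True h6 in \<open>simp_all add: inner_diff_right\<close>)
      moreover have "ct n4 (hv v 3) (hv v 3) (hv v 4) (hv v 5) (hv v 1) (hv v 2) = 0"
        by (rule tri_below[where NN = N]) (use Z2 z3 z5 True h6 in \<open>simp_all add: inner_diff_right\<close>)
      ultimately show False using D4 Dnz(2) by simp
    next
      case False
      hence h0: "N \<bullet> hv v 4 = N \<bullet> hv v 1" using h by simp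
      have "ct n4 (hv v 3) (hv v 3) (hv v 4) (hv v 5) (hv v 6) (hv v 1)
          + ct n4 (hv v 3) (hv v 3) (hv v 4) (hv v 5) (hv v 1) (hv v 2) = 0"
        by (rule tri_flat_zero[OF N0 _ _ n4_def]) (use Z2 z3 z5 h0 h6 in \<open>simp_all add: inner_diff_right\<close>)
      thus False using D4 Dnz(2) by simp
    qed
  qed
  have Z6: "N \<bullet> hv v 6 > N \<bullet> hv v 1"
  proof (rule ccontr)
    assume "\<not> ?thesis"
    hence h: "N \<bullet> hv v 6 \<le> N \<bullet> hv v 1" by auto
    show False
    proof (cases "N \<bullet> hv v 6 < N \<bullet> hv v 1")
      case True
      have "ct n6 (hv v 5) (hv v 5) (hv v 6) (hv v 1) (hv v 2) (hv v 3) = 0"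
        by (rule tri_below[where NN = N]) (use Z2 Z4 z3 z5 True in \<open>simp_all add: inner_diff_right\<close>)
      moreover have "ct n6 (hv v 5) (hv v 5) (hv v 6) (hv v 1) (hv v 3) (hv v 4) = 0"
        by (rule tri_below[where NN = N]) (use Z2 Z4 z3 z5 True in \<open>simp_all add: inner_diff_right\<close>)
      ultimately show False using D6 Dnz(3) by simp
    next
      case False
      hence h0: "N \<bullet> hv v 6 = N \<bullet> hv v 1" using h by simp
      have "ct n6 (hv v 5) (hv v 5) (hv v 6) (hv v 1) (hv v 2) (hv v 3)
          + ct n6 (hv v 5) (hv v 5) (hv v 6) (hv v 1) (hv v 3) (hv v 4) = 0"
        by (rule tri_flat_zero[OF N0 _ _ n6_def]) (use Z2 Z4 z3 z5 h0 in \<open>simp_all add: inner_diff_right\<close>)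
      thus False using D6 Dnz(3) by simp
    qed
  qed
  have r2: "n2 \<bullet> (hv v 5 - hv v 1) > 0"
  proof -
    have "n2 \<bullet> (hv v 5 - hv v 1) = N \<bullet> (hv v 2 - hv v 1)" unfolding n2_def N_def by (rule tri_id)
    thus ?thesis using Z2 by (simp add: inner_diff_right)
  qed
  have r4: "n4 \<bullet> (hv v 1 - hv v 3) > 0"
  proof -
    have "n4 \<bullet> (hv v 1 - hv v 3) = N \<bullet> (hv v 4 - hv v 3)" unfolding n4_def N2[symmetric] by (rule tri_id)
    thus ?thesis using Z4 z3 by (simp add: inner_diff_right)
  qed
  have r6: "n6 \<bullet> (hv v 3 - hv v 5) > 0"
  proof -
    have "n6 \<bullet> (hv v 3 - hv v 5) = N \<bullet> (hv v 6 - hv v 5)" unfolding n6_def N3[symmetric] by (rule tri_id)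
    thus ?thesis using Z6 z5 by (simp add: inner_diff_right)
  qed
  define a2 where "a2 = ct n2 (hv v 1) (hv v 1) (hv v 2) (hv v 3) (hv v 4) (hv v 5)"
  define b2 where "b2 = ct n2 (hv v 1) (hv v 1) (hv v 2) (hv v 3) (hv v 5) (hv v 6)"
  define a4 where "a4 = ct n4 (hv v 3) (hv v 3) (hv v 4) (hv v 5) (hv v 6) (hv v 1)"
  define b4 where "b4 = ct n4 (hv v 3) (hv v 3) (hv v 4) (hv v 5) (hv v 1) (hv v 2)"
  define a6 where "a6 = ct n6 (hv v 5) (hv v 5) (hv v 6) (hv v 1) (hv v 2) (hv v 3)"
  define b6 where "b6 = ct n6 (hv v 5) (hv v 5) (hv v 6) (hv v 1) (hv v 3) (hv v 4)"
  note A2 = ct_range_in[where n = n2 and a = "hv v 1" and A = "hv v 1" and B = "hv v 2" and C = "hv v 3" and p = "hv v 4" and q = "hv v 5", OF r2, folded a2_def]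
  note B2 = ct_range_out[where n = n2 and a = "hv v 1" and A = "hv v 1" and B = "hv v 2" and C = "hv v 3" and p = "hv v 5" and q = "hv v 6", OF r2, folded b2_def]
  note A4 = ct_range_in[where n = n4 and a = "hv v 3" and A = "hv v 3" and B = "hv v 4" and C = "hv v 5" and p = "hv v 6" and q = "hv v 1", OF r4, folded a4_def]
  note B4 = ct_range_out[where n = n4 and a = "hv v 3" and A = "hv v 3" and B = "hv v 4" and C = "hv v 5" and p = "hv v 1" and q = "hv v 2", OF r4, folded b4_def]
  note A6 = ct_range_in[where n = n6 and a = "hv v 5" and A = "hv v 5" and B = "hv v 6" and C = "hv v 1" and p = "hv v 2" and q = "hv v 3", OF r6, folded a6_def]
  note B6 = ct_range_out[where n = n6 and a = "hv v 5" and A = "hv v 5" and B = "hv v 6" and C = "hv v 1" and p = "hv v 3" and q = "hv v 4", OF r6, folded b6_def]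
  have D2': "Delta v 2 = a2 + b2" using D2 unfolding a2_def b2_def .
  have D4': "Delta v 4 = a4 + b4" using D4 unfolding a4_def b4_def .
  have D6': "Delta v 6 = a6 + b6" using D6 unfolding a6_def b6_def .
  have ab: "\<bar>Delta v 2\<bar> \<le> 1" "\<bar>Delta v 4\<bar> \<le> 1" "\<bar>Delta v 6\<bar> \<le> 1"
    using D2' D4' D6' A2(1,2) B2(1,2) A4(1,2) B4(1,2) A6(1,2) B6(1,2) by auto
  note one = prod3[OF ab Jp]
  have c2: "(Delta v 2 = 1 \<and> a2 = 1) \<or> (Delta v 2 = -1 \<and> b2 = -1)"
    using one(1) D2' A2(1,2) B2(1,2) by (auto simp: abs_if split: if_splits)
  have c4: "(Delta v 4 = 1 \<and> a4 = 1) \<or> (Delta v 4 = -1 \<and> b4 = -1)"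
    using one(2) D4' A4(1,2) B4(1,2) by (auto simp: abs_if split: if_splits)
  have c6: "(Delta v 6 = 1 \<and> a6 = 1) \<or> (Delta v 6 = -1 \<and> b6 = -1)"
    using one(3) D6' A6(1,2) B6(1,2) by (auto simp: abs_if split: if_splits)
  have rot: "\<And>A B C. open_triangle A B C = open_triangle C A B"
    using open_triangle_rot by metis
  have pl2': "n2 \<bullet> (hv v 2 - hv v 1) = 0" "n2 \<bullet> (hv v 3 - hv v 1) = 0"
    "n2 \<bullet> (hv v 1 - hv v 3) = 0" "n2 \<bullet> (hv v 2 - hv v 3) = 0"
    using pl2 by (simp_all add: inner_diff_right)
  have pl4': "n4 \<bullet> (hv v 4 - hv v 3) = 0" "n4 \<bullet> (hv v 5 - hv v 3) = 0"
    "n4 \<bullet> (hv v 3 - hv v 5) = 0" "n4 \<bullet> (hv v 4 - hv v 5) = 0"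
    using pl4 by (simp_all add: inner_diff_right)
  have pl6': "n6 \<bullet> (hv v 6 - hv v 5) = 0" "n6 \<bullet> (hv v 1 - hv v 5) = 0"
    "n6 \<bullet> (hv v 5 - hv v 1) = 0" "n6 \<bullet> (hv v 6 - hv v 1) = 0"
    using pl6 by (simp_all add: inner_diff_right)
  have r2': "n2 \<bullet> (hv v 5 - hv v 3) > 0" using r2 pl2 by (simp add: inner_diff_right)
  have r4': "n4 \<bullet> (hv v 1 - hv v 5) > 0" using r4 pl4 by (simp add: inner_diff_right)
  have r6': "n6 \<bullet> (hv v 3 - hv v 1) > 0" using r6 pl6 by (simp add: inner_diff_right)
  have no1: "\<not> (a2 = 1 \<and> b4 = -1)"
  proof
    assume h: "a2 = 1 \<and> b4 = -1"
    obtain x t where x: "x \<in> open_triangle (hv v 1) (hv v 2) (hv v 3)" "x = (1 - t) *\<^sub>R hv v 4 + t *\<^sub>R hv v 5"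
      using A2(3) h by blast
    obtain y m where y: "y \<in> open_triangle (hv v 3) (hv v 4) (hv v 5)" "y = (1 - m) *\<^sub>R hv v 1 + m *\<^sub>R hv v 2"
      using B4(3) h by blast
    have x': "x \<in> open_triangle (hv v 3) (hv v 1) (hv v 2)" using x(1) rot by metis
    show False
      by (rule shared_vertex[OF ind4 y(1) y(2) x' x(2), where mm = n4 and nn = n2])
        (use pl4' pl2' r4 r2' in auto)
  qed
  have no2: "\<not> (a4 = 1 \<and> b6 = -1)"
  proof
    assume h: "a4 = 1 \<and> b6 = -1"
    obtain x t where x: "x \<in> open_triangle (hv v 3) (hv v 4) (hv v 5)" "x = (1 - t) *\<^sub>R hv v 6 + t *\<^sub>R hv v 1"
      using A4(3) h by blast
    obtain y m where y: "y \<in> open_triangle (hv v 5) (hv v 6) (hv v 1)" "y = (1 - m) *\<^sub>R hv v 3 + m *\<^sub>R hv v 4"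
      using B6(3) h by blast
    have x': "x \<in> open_triangle (hv v 5) (hv v 3) (hv v 4)" using x(1) rot by metis
    show False
      by (rule shared_vertex[OF ind6 y(1) y(2) x' x(2), where mm = n6 and nn = n4])
        (use pl6' pl4' r6 r4' in auto)
  qed
  have no3: "\<not> (a6 = 1 \<and> b2 = -1)"
  proof
    assume h: "a6 = 1 \<and> b2 = -1"
    obtain x t where x: "x \<in> open_triangle (hv v 5) (hv v 6) (hv v 1)" "x = (1 - t) *\<^sub>R hv v 2 + t *\<^sub>R hv v 3"
      using A6(3) h by blast
    obtain y m where y: "y \<in> open_triangle (hv v 1) (hv v 2) (hv v 3)" "y = (1 - m) *\<^sub>R hv v 5 + m *\<^sub>R hv v 6"
      using B2(3) h by blast
    have x': "x \<in> open_triangle (hv v 1) (hv v 5) (hv v 6)" using x(1) rot by metis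
    show False
      by (rule shared_vertex[OF ind2 y(1) y(2) x' x(2), where mm = n2 and nn = n6])
        (use pl2' pl6' r2 r6' in auto)
  qed
  have allneg: "b2 = -1 \<and> b4 = -1 \<and> b6 = -1"
    using c2 c4 c6 no1 no2 no3 Jp by auto
  obtain x t where x: "x \<in> open_triangle (hv v 1) (hv v 2) (hv v 3)" "x = (1 - t) *\<^sub>R hv v 5 + t *\<^sub>R hv v 6"
    and s26: "n2 \<bullet> (hv v 6 - hv v 1) < 0"
    using B2(3) allneg by blast
  obtain y m where y: "y \<in> open_triangle (hv v 3) (hv v 4) (hv v 5)" "y = (1 - m) *\<^sub>R hv v 1 + m *\<^sub>R hv v 2"
    and s42: "n4 \<bullet> (hv v 2 - hv v 3) < 0"
    using B4(3) allneg by blast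
  obtain w k where w: "w \<in> open_triangle (hv v 5) (hv v 6) (hv v 1)" "w = (1 - k) *\<^sub>R hv v 3 + k *\<^sub>R hv v 4"
    and s64: "n6 \<bullet> (hv v 4 - hv v 5) < 0"
    using B6(3) allneg by blast
  have o1: "n6 \<bullet> (hv v 2 - hv v 1) < 0"
    by (rule other_side[OF x(1) x(2)]) (use pl6' r6' in auto)
  have o3: "n2 \<bullet> (hv v 4 - hv v 3) < 0"
    by (rule other_side[OF y(1) y(2)]) (use pl2' r2' in auto)
  have o5: "n4 \<bullet> (hv v 6 - hv v 5) < 0"
    by (rule other_side[OF w(1) w(2)]) (use pl4' r4' in auto)
  have sgnN: "aa_ez v = sgn N" unfolding aa_ez_def N_def ..
  have th1: "0 \<le> aa_theta v 1 \<and> aa_theta v 1 < 2 * pi \<and>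
     hv v 2 = midpoint (hv v 1) (hv v 3) + (sqrt (4 - (dist (hv v 3) (hv v 1))\<^sup>2) / 2) *\<^sub>R
        (cos (aa_theta v 1) *\<^sub>R uform (hv v 1) (hv v 3) (hv v 5) + sin (aa_theta v 1) *\<^sub>R sgn N)"
    using aa_theta_prop[of v 1] N0 sgnN e1 e1' d1 unfolding N_def by simp
  have th2: "0 \<le> aa_theta v 2 \<and> aa_theta v 2 < 2 * pi \<and>
     hv v 4 = midpoint (hv v 3) (hv v 5) + (sqrt (4 - (dist (hv v 5) (hv v 3))\<^sup>2) / 2) *\<^sub>R
        (cos (aa_theta v 2) *\<^sub>R uform (hv v 3) (hv v 5) (hv v 1) + sin (aa_theta v 2) *\<^sub>R sgn N)"
  proof -
    have "norm (hv v 4 - hv v 3) = 1" "norm (hv v 4 - hv v 5) = 1" using e3 e3' by auto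
    thus ?thesis using aa_theta_prop[of v 2] N0 sgnN d2 hv7 N2 by simp
  qed
  have th3: "0 \<le> aa_theta v 3 \<and> aa_theta v 3 < 2 * pi \<and>
     hv v 6 = midpoint (hv v 5) (hv v 1) + (sqrt (4 - (dist (hv v 1) (hv v 5))\<^sup>2) / 2) *\<^sub>R
        (cos (aa_theta v 3) *\<^sub>R uform (hv v 5) (hv v 1) (hv v 3) + sin (aa_theta v 3) *\<^sub>R sgn N)"
  proof -
    have "norm (hv v 6 - hv v 5) = 1" "norm (hv v 6 - hv v 1) = 1" using e5 e5' by auto
    thus ?thesis using aa_theta_prop[of v 3] N0 sgnN d3 hv7 hv9 N3 by simp
  qed
  define R1 where "R1 = sqrt (4 - (dist (hv v 3) (hv v 1))\<^sup>2) / 2"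
  define R2 where "R2 = sqrt (4 - (dist (hv v 5) (hv v 3))\<^sup>2) / 2"
  define R3 where "R3 = sqrt (4 - (dist (hv v 1) (hv v 5))\<^sup>2) / 2"
  have Rpos: "R1 > 0" "R2 > 0" "R3 > 0"
  proof -
    have q: "\<And>d::real. 0 < d \<Longrightarrow> d < 2 \<Longrightarrow> sqrt (4 - d\<^sup>2) / 2 > 0"
    proof -
      fix d :: real assume "0 < d" "d < 2"
      hence "d * d < 2 * 2" by (intro mult_strict_mono) auto
      thus "sqrt (4 - d\<^sup>2) / 2 > 0" by (simp add: power2_eq_square)
    qed
    show "R1 > 0" "R2 > 0" "R3 > 0" unfolding R1_def R2_def R3_def using q d1 d2 d3 by auto
  qed
  have nNp: "norm N > 0" using N0 by simp
  have s1: "sin (aa_theta v 1) > 0"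
  proof -
    have "N \<bullet> (hv v 2 - hv v 1) = R1 * sin (aa_theta v 1) * norm N"
      using theta_height[where a = "hv v 1" and b = "hv v 3" and c = "hv v 5" and p = "hv v 2" and R = R1 and th = "aa_theta v 1"] N0 th1
      unfolding N_def R1_def by simp
    moreover have "N \<bullet> (hv v 2 - hv v 1) > 0" using Z2 by (simp add: inner_diff_right)
    ultimately show ?thesis using Rpos nNp by (simp add: zero_less_mult_iff)
  qed
  have s2: "sin (aa_theta v 2) > 0"
  proof -
    have "N \<bullet> (hv v 4 - hv v 3) = R2 * sin (aa_theta v 2) * norm N"
      using theta_height[where a = "hv v 3" and b = "hv v 5" and c = "hv v 1" and p = "hv v 4" and R = R2 and th = "aa_theta v 2"] N0 th2 N2
      unfolding R2_def by simp
    moreover have "N \<bullet> (hv v 4 - hv v 3) > 0" using Z4 z3 by (simp add: inner_diff_right)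
    ultimately show ?thesis using Rpos nNp by (simp add: zero_less_mult_iff)
  qed
  have s3: "sin (aa_theta v 3) > 0"
  proof -
    have "N \<bullet> (hv v 6 - hv v 5) = R3 * sin (aa_theta v 3) * norm N"
      using theta_height[where a = "hv v 5" and b = "hv v 1" and c = "hv v 3" and p = "hv v 6" and R = R3 and th = "aa_theta v 3"] N0 th3 N3
      unfolding R3_def by simp
    moreover have "N \<bullet> (hv v 6 - hv v 5) > 0" using Z6 z5 by (simp add: inner_diff_right)
    ultimately show ?thesis using Rpos nNp by (simp add: zero_less_mult_iff)
  qed
  have rg1: "0 < aa_theta v 1 \<and> aa_theta v 1 < pi" using sin_pos_range th1 s1 by blast
  have rg2: "0 < aa_theta v 2 \<and> aa_theta v 2 < pi" using sin_pos_range th2 s2 by blast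
  have rg3: "0 < aa_theta v 3 \<and> aa_theta v 3 < pi" using sin_pos_range th3 s3 by blast
  have uf: "\<And>a b c. uform a b c = sgn ((c - midpoint a b) - (((c - midpoint a b) \<bullet> (b - a)) / ((b - a) \<bullet> (b - a))) *\<^sub>R (b - a))"
    unfolding uform_def ..
  have sum13: "sin (aa_theta v 1 + aa_theta v 3) > 0"
    by (rule trig_core[where A = "hv v 1" and B = "hv v 3" and C = "hv v 5" and P = "hv v 2" and Q = "hv v 6"
          and ez = "sgn N" and uAB = "uform (hv v 1) (hv v 3) (hv v 5)" and uCA = "uform (hv v 5) (hv v 1) (hv v 3)"
          and R = R1 and R' = R3])
       (use N0 th1 th3 Rpos s1 s3 s26 o1 in \<open>simp_all add: N_def R1_def R3_def uf n2_def n6_def\<close>)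
  have sum12: "sin (aa_theta v 2 + aa_theta v 1) > 0"
    by (rule trig_core[where A = "hv v 3" and B = "hv v 5" and C = "hv v 1" and P = "hv v 4" and Q = "hv v 2"
          and ez = "sgn N" and uAB = "uform (hv v 3) (hv v 5) (hv v 1)" and uCA = "uform (hv v 1) (hv v 3) (hv v 5)"
          and R = R2 and R' = R1])
       (use N0 N2 th1 th2 Rpos s1 s2 s42 o3 in \<open>simp_all add: R1_def R2_def uf n2_def n4_def\<close>)
  have sum23: "sin (aa_theta v 3 + aa_theta v 2) > 0"
    by (rule trig_core[where A = "hv v 5" and B = "hv v 1" and C = "hv v 3" and P = "hv v 6" and Q = "hv v 4"
          and ez = "sgn N" and uAB = "uform (hv v 5) (hv v 1) (hv v 3)" and uCA = "uform (hv v 3) (hv v 5) (hv v 1)"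
          and R = R3 and R' = R2])
       (use N0 N3 th2 th3 Rpos s2 s3 s64 o5 in \<open>simp_all add: R2_def R3_def uf n4_def n6_def\<close>)
  have f13: "aa_theta v 1 + aa_theta v 3 < pi" using sum_range rg1 rg3 sum13 by blast
  have f12: "aa_theta v 1 + aa_theta v 2 < pi" using sum_range[of "aa_theta v 2" "aa_theta v 1"] rg1 rg2 sum12 by (simp add: add.commute)
  have f23: "aa_theta v 2 + aa_theta v 3 < pi" using sum_range[of "aa_theta v 3" "aa_theta v 2"] rg2 rg3 sum23 by (simp add: add.commute)
  show ?thesis using rg1 rg2 rg3 f12 f13 f23 by auto
qed

end
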